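(* Let $R,K,N,s$ be positive integers with $s\le N$, $m=RK$, $p\in[0,1]$, $\epsilon>0$, $c>0$. There is a constant $C>0$ depending only on $c$ such that the following holds. Let $\mathbf{A}\in\mathbb{R}^{m\times N}$ be a subGaussian random matrix with parameter $c$, and let $\mathcal{T}\subseteq\{1,\ldots,m\}$ be the random set of indices of measurements observed at the fusion center of a serial-star network with $R$ branches of $K$ sensors (independent of $\mathbf{A}$). Let $\delta\in(0,1)$. If $$R\ \ge\ \left[\ln\frac{1-pe^{-C\delta^2}}{1-p+p\left(1-e^{-C\delta^2}\right)\left(pe^{-C\delta^2}\right)^K}\right]^{-1}\left[\frac{4}{3}s\ln\left(\frac{eN}{s}\right)+\frac{14}{3}s+\frac{4}{3}\ln\frac{2}{\epsilon}\right],$$ then with probability at least $1-\epsilon$ the $s$-restricted isometry constant $\delta_s$ of $|\mathcal{T}|^{-1/2}\mathbf{A}_{\mathcal{T}}$ satisfies $\delta_s<\delta$.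
   Context: A random variable $A$ is subGaussian with parameter $c$ if $\mathbb{E}[\exp(\theta A)]\le\exp(c\theta^2)$ for all $\theta\in\mathbb{R}$; a subGaussian random matrix with parameter $c$ has independent, zero mean, unit variance subGaussian entries with common parameter $c$. Serial-star network: the $m=RK$ sensors are arranged in $R$ branches; in each branch sensor $j$ ($j=1,\ldots,K$) forwards all measurements it holds (its own plus those received from sensor $j-1$) to sensor $j+1$, and sensor $K$ forwards to the fusion center. Each of the $RK$ links (sensor $j\to j+1$ for $j<K$, and sensor $K\to$ fusion center) is an independent Bernoulli erasure channel delivering the transmitted data with probability $p$ and losing it otherwise; thus the measurement of sensor $j$ in a branch reaches the fusion center iff all $K-j+1$ links from sensor $j$ onward succeed. $\mathcal{T}$ is the set of indices of measurements reaching the fusion center and $\mathbf{A}_{\mathcal{T}}$ the submatrix of rows indexed by $\mathcal{T}$. The $s$-restricted isometry constant of a matrix $\mathbf{B}$ with $N$ columns is $\delta_s=\inf\{\delta:1-\delta\le\|\mathbf{B}\mathbf{z}\|^2\le1+\delta\ \forall\mathbf{z},\ \|\mathbf{z}\|=1,\ \|\mathbf{z}\|_0\le s\}$. The right-hand side is $+\infty$ when $p=0$. *)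

theory Defs
  imports "HOL-Probability.Probability"
begin

text \<open>A matrix is represented as a function B :: nat => nat => real, with
  rows indexed by a finite set I and columns by {..<N}.  Vectors z in R^N are
  functions nat => real vanishing outside {..<N}.\<close>

definition sq_norm_image :: "(nat \<Rightarrow> nat \<Rightarrow> real) \<Rightarrow> nat set \<Rightarrow> nat \<Rightarrow> (nat \<Rightarrow> real) \<Rightarrow> real" where
  "sq_norm_image B I N z = (\<Sum>i\<in>I. (\<Sum>j<N. B i j * z j)\<^sup>2)"

definition sparse_unit :: "nat \<Rightarrow> nat \<Rightarrow> (nat \<Rightarrow> real) \<Rightarrow> bool" where
  "sparse_unit N s z \<longleftrightarrow> (\<forall>j\<ge>N. z j = 0) \<and> (\<Sum>j<N. (z j)\<^sup>2) = 1
      \<and> card {j\<in>{..<N}. z j \<noteq> 0} \<le> s"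

definition ric :: "(nat \<Rightarrow> nat \<Rightarrow> real) \<Rightarrow> nat set \<Rightarrow> nat \<Rightarrow> nat \<Rightarrow> real" where
  "ric B I N s = Inf {d. \<forall>z. sparse_unit N s z \<longrightarrow>
       1 - d \<le> sq_norm_image B I N z \<and> sq_norm_image B I N z \<le> 1 + d}"

text \<open>Serial-star network: link k (0-based, k < K) of branch r carries the data
  out of sensor k (to sensor k+1, or to the fusion center if k = K-1).\<close>
definition received :: "nat \<Rightarrow> nat \<Rightarrow> (nat \<Rightarrow> nat \<Rightarrow> bool) \<Rightarrow> nat set" where
  "received R K L = {r * K + j | r j. r < R \<and> j < K \<and> (\<forall>k. j \<le> k \<and> k < K \<longrightarrow> L r k)}"

end

theory Submission
  imports Defs
begin

lemma pow_div_fact_le_exp: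
  fixes x :: real assumes "0 \<le> x"
  shows "x ^ n / fact n \<le> exp x"
proof -
  have "(\<lambda>n. x ^ n /\<^sub>R fact n) sums exp x" by (rule exp_converges)
  hence s: "summable (\<lambda>n. x ^ n /\<^sub>R fact n)" and e: "exp x = (\<Sum>n. x ^ n /\<^sub>R fact n)"
    by (auto simp: sums_iff)
  have "(\<Sum>i\<in>{n}. x ^ i /\<^sub>R fact i) \<le> (\<Sum>n. x ^ n /\<^sub>R fact n)"
    by (rule sum_le_suminf[OF s]) (use assms in auto)
  thus ?thesis using e by (simp add: divide_inverse mult.commute)
qed

lemma fact_le_self_pow: "fact k \<le> (k::nat) ^ k"
proof (induction k)
  case 0 then show ?case by simp
next
  case (Suc k)
  have "fact (Suc k) = Suc k * fact k" by simp
  also have "\<dots> \<le> Suc k * k ^ k" by (rule mult_le_mono2) (rule Suc.IH)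
  also have "\<dots> \<le> Suc k * Suc k ^ k" by (intro mult_le_mono2 power_mono) auto
  finally show ?case by simp
qed

lemma binom_bound:
  assumes "0 < s" "s \<le> N"
  shows "real (N choose s) \<le> (exp 1 * real N / real s) ^ s"
proof -
  have a: "real (N choose s) * fact s \<le> real N ^ s"
    using binomial_fact_pow[of N s] by (metis of_nat_fact of_nat_le_iff of_nat_mult of_nat_power)
  have b: "real s ^ s / fact s \<le> exp (real s)" by (rule pow_div_fact_le_exp) simp
  have fs: "(0::real) < fact s" by simp
  have "real (N choose s) \<le> real N ^ s / fact s" using a fs by (simp add: field_simps)
  also have "\<dots> = real N ^ s / real s ^ s * (real s ^ s / fact s)" using assms by (simp add: field_simps)
  also have "\<dots> \<le> real N ^ s / real s ^ s * exp (real s)"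
    by (rule mult_left_mono[OF b]) simp
  also have "\<dots> = (exp 1 * real N / real s) ^ s"
    by (simp add: power_divide power_mult_distrib exp_of_nat_mult[symmetric] mult.commute)
  finally show ?thesis .
qed

lemma sum_exp_neg_sq_int:
  "(\<Sum>i\<in>{-m..m}. exp (- (real_of_int i)\<^sup>2)) \<le> (4::real)"
proof (cases "m < 0")
  case True then show ?thesis by simp
next
  case False
  have sub: "{-m..m} \<subseteq> uminus ` int ` {0..nat m} \<union> int ` {0..nat m}"
  proof
    fix i assume i: "i \<in> {-m..m}"
    show "i \<in> uminus ` int ` {0..nat m} \<union> int ` {0..nat m}"
    proof (cases "i \<ge> 0")
      case True then have "i = int (nat i)" by simp
      then show ?thesis using i by (auto intro!: image_eqI[of _ _ "nat i"])
    next
      case False then have "i = - int (nat (-i))" by simp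
      then show ?thesis using i by (auto intro!: image_eqI[of _ _ "int (nat (-i))"])
    qed
  qed
  have le: "exp (- (real_of_int i)\<^sup>2) \<le> (1/2) ^ nat \<bar>i\<bar>" for i :: int
  proof -
    have "exp (- (real_of_int i)\<^sup>2) \<le> exp (- real (nat \<bar>i\<bar>))"
    proof -
      have "real (nat \<bar>i\<bar>) = \<bar>real_of_int i\<bar>" by simp
      moreover have "\<bar>real_of_int i\<bar> \<le> (real_of_int i)\<^sup>2"
      proof (cases "i = 0")
        case False
        then have "\<bar>i\<bar> \<ge> 1" by simp
        then have "\<bar>real_of_int i\<bar> \<ge> 1" by (metis of_int_1_le_iff of_int_abs)
        then have "\<bar>real_of_int i\<bar> * 1 \<le> \<bar>real_of_int i\<bar> * \<bar>real_of_int i\<bar>" by (intro mult_left_mono) auto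
        then show ?thesis by (simp add: power2_eq_square abs_mult[symmetric])
      qed simp
      ultimately show ?thesis by simp
    qed
    also have "\<dots> = (exp (-1)) ^ nat \<bar>i\<bar>" by (simp add: exp_of_nat_mult[symmetric])
    also have "\<dots> \<le> (1/2) ^ nat \<bar>i\<bar>"
    proof (rule power_mono)
      have "exp (1::real) \<ge> 2" using exp_ge_add_one_self[of 1] by simp
      then show "exp (-1) \<le> (1/2::real)" by (simp add: exp_minus field_simps)
    qed simp
    finally show ?thesis .
  qed
  have g: "(\<Sum>k\<in>{0..nat m}. (1/2::real) ^ k) \<le> 2"
    using geometric_sum_less[of "1/2::real" "{0..nat m}"] by simp
  have "(\<Sum>i\<in>{-m..m}. exp (- (real_of_int i)\<^sup>2)) \<le> (\<Sum>i\<in>uminus ` int ` {0..nat m} \<union> int ` {0..nat m}. exp (- (real_of_int i)\<^sup>2))"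
    by (rule sum_mono2[OF _ sub]) auto
  also have "\<dots> \<le> (\<Sum>i\<in>uminus ` int ` {0..nat m}. exp (- (real_of_int i)\<^sup>2)) + (\<Sum>i\<in>int ` {0..nat m}. exp (- (real_of_int i)\<^sup>2))"
    by (subst sum_Un) (auto intro: sum_nonneg)
  also have "(\<Sum>i\<in>uminus ` int ` {0..nat m}. exp (- (real_of_int i)\<^sup>2)) = (\<Sum>k\<in>{0..nat m}. exp (- (real k)\<^sup>2))"
    by (subst sum.reindex) (auto simp: inj_on_def sum.reindex)
  also have "(\<Sum>i\<in>int ` {0..nat m}. exp (- (real_of_int i)\<^sup>2)) = (\<Sum>k\<in>{0..nat m}. exp (- (real k)\<^sup>2))"
    by (subst sum.reindex) (auto simp: inj_on_def)
  also have "(\<Sum>k\<in>{0..nat m}. exp (- (real k)\<^sup>2)) \<le> (\<Sum>k\<in>{0..nat m}. (1/2::real) ^ k)"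
    by (rule sum_mono) (use le[of "int k" for k] in simp)
  finally show ?thesis using g by simp
qed

lemma lattice_count:
  fixes S :: "'a set" and D :: real and m :: int
  assumes "finite S"
  shows "real (card {k \<in> PiE S (\<lambda>_. {-m..m}). (\<Sum>j\<in>S. (real_of_int (k j))\<^sup>2) \<le> D}) \<le> exp D * 4 ^ card S"
proof -
  let ?P = "PiE S (\<lambda>_. {-m..m})"
  let ?X = "{k \<in> ?P. (\<Sum>j\<in>S. (real_of_int (k j))\<^sup>2) \<le> D}"
  have fP: "finite ?P" using assms by (intro finite_PiE) auto
  have "real (card ?X) = (\<Sum>k\<in>?X. 1)" by simp
  also have "\<dots> \<le> (\<Sum>k\<in>?X. exp (D - (\<Sum>j\<in>S. (real_of_int (k j))\<^sup>2)))"
    by (rule sum_mono) auto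
  also have "\<dots> \<le> (\<Sum>k\<in>?P. exp (D - (\<Sum>j\<in>S. (real_of_int (k j))\<^sup>2)))"
    by (rule sum_mono2[OF fP]) auto
  also have "\<dots> = exp D * (\<Sum>k\<in>?P. (\<Prod>j\<in>S. exp (- (real_of_int (k j))\<^sup>2)))"
  proof -
    have "exp (D - (\<Sum>j\<in>S. (real_of_int (k j))\<^sup>2)) = exp D * (\<Prod>j\<in>S. exp (- (real_of_int (k j))\<^sup>2))" for k
    proof -
      have "exp (D - (\<Sum>j\<in>S. (real_of_int (k j))\<^sup>2)) = exp D * exp (\<Sum>j\<in>S. - (real_of_int (k j))\<^sup>2)"
        by (simp add: sum_negf exp_add[symmetric])
      then show ?thesis by (simp add: exp_sum[OF assms])
    qed
    then show ?thesis by (simp add: sum_distrib_left)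
  qed
  also have "(\<Sum>k\<in>?P. (\<Prod>j\<in>S. exp (- (real_of_int (k j))\<^sup>2))) = (\<Prod>j\<in>S. \<Sum>i\<in>{-m..m}. exp (- (real_of_int i)\<^sup>2))"
    by (rule prod_sum_PiE[symmetric]) (use assms in auto)
  also have "\<dots> \<le> (\<Prod>j\<in>S. 4)"
    by (rule prod_mono) (auto intro: sum_nonneg sum_exp_neg_sq_int)
  finally show ?thesis by simp
qed

definition lin :: "(nat \<Rightarrow> nat \<Rightarrow> real) \<Rightarrow> nat \<Rightarrow> nat \<Rightarrow> (nat \<Rightarrow> real) \<Rightarrow> real" where
  "lin a N i z = (\<Sum>j<N. a i j * z j)"
definition sqn :: "nat \<Rightarrow> (nat \<Rightarrow> real) \<Rightarrow> real" where
  "sqn N z = (\<Sum>j<N. (z j)\<^sup>2)"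
definition Qf :: "(nat \<Rightarrow> nat \<Rightarrow> real) \<Rightarrow> nat set \<Rightarrow> nat \<Rightarrow> (nat \<Rightarrow> real) \<Rightarrow> real" where
  "Qf a t N z = (\<Sum>i\<in>t. (lin a N i z)\<^sup>2) / real (card t) - sqn N z"
definition hstep :: "nat \<Rightarrow> real" where
  "hstep s = 1 / (10 * sqrt (real s))"
definition nvec :: "nat set \<Rightarrow> nat \<Rightarrow> (nat \<Rightarrow> int) \<Rightarrow> nat \<Rightarrow> real" where
  "nvec S s k = (\<lambda>j. if j \<in> S then hstep s * of_int (k j) else 0)"
definition Net :: "nat set \<Rightarrow> nat \<Rightarrow> (nat \<Rightarrow> int) set" where
  "Net S s = {k \<in> PiE S (\<lambda>_. {- int (11 * s) .. int (11 * s)}). (\<Sum>j\<in>S. (real_of_int (k j))\<^sup>2) \<le> 201 * real s}"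

lemma lin_comb: "lin a N i (\<lambda>j. \<alpha> * u j + \<beta> * v j) = \<alpha> * lin a N i u + \<beta> * lin a N i v"
  unfolding lin_def by (simp add: algebra_simps sum.distrib sum_distrib_left)

lemma lin_scale: "lin a N i (\<lambda>j. \<alpha> * u j) = \<alpha> * lin a N i u"
  unfolding lin_def by (simp add: algebra_simps sum_distrib_left)

lemma sqn_nonneg: "0 \<le> sqn N z" unfolding sqn_def by (auto intro: sum_nonneg)

lemma sqn_scale: "sqn N (\<lambda>j. \<alpha> * u j) = \<alpha>\<^sup>2 * sqn N u"
  unfolding sqn_def by (simp add: power_mult_distrib sum_distrib_left)

lemma Qf_scale: "Qf a t N (\<lambda>j. \<alpha> * u j) = \<alpha>\<^sup>2 * Qf a t N u"
  unfolding Qf_def by (simp add: lin_scale sqn_scale power_mult_distrib sum_distrib_left algebra_simps diff_divide_distrib)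

lemma Qf_polar:
  fixes \<tau> :: real assumes "\<tau> \<noteq> 0"
  shows "Qf a t N (\<lambda>j. \<tau> * (z j - x j) + (1/\<tau>) * (z j + x j)) - Qf a t N (\<lambda>j. \<tau> * (z j - x j) - (1/\<tau>) * (z j + x j))
       = 4 * (Qf a t N z - Qf a t N x)"
proof -
  have key: "(\<tau> * (\<alpha> - \<beta>) + (1/\<tau>) * (\<alpha> + \<beta>))\<^sup>2 - (\<tau> * (\<alpha> - \<beta>) - (1/\<tau>) * (\<alpha> + \<beta>))\<^sup>2 = 4 * (\<alpha>\<^sup>2 - \<beta>\<^sup>2)" for \<alpha> \<beta> :: real
    using assms by (simp add: power2_eq_square field_simps)
  have l1: "lin a N i (\<lambda>j. \<tau> * (z j - x j) + (1/\<tau>) * (z j + x j)) = \<tau> * (lin a N i z - lin a N i x) + (1/\<tau>) * (lin a N i z + lin a N i x)" for i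
    unfolding lin_def by (simp add: algebra_simps sum.distrib sum_distrib_left sum_subtractf)
  have l2: "lin a N i (\<lambda>j. \<tau> * (z j - x j) - (1/\<tau>) * (z j + x j)) = \<tau> * (lin a N i z - lin a N i x) - (1/\<tau>) * (lin a N i z + lin a N i x)" for i
    unfolding lin_def by (simp add: algebra_simps sum.distrib sum_distrib_left sum_subtractf)
  have s: "sqn N (\<lambda>j. \<tau> * (z j - x j) + (1/\<tau>) * (z j + x j)) - sqn N (\<lambda>j. \<tau> * (z j - x j) - (1/\<tau>) * (z j + x j))
     = 4 * (sqn N z - sqn N x)"
    unfolding sqn_def
  proof -
    have "(\<Sum>j<N. (\<tau> * (z j - x j) + (1/\<tau>) * (z j + x j))\<^sup>2) - (\<Sum>j<N. (\<tau> * (z j - x j) - (1/\<tau>) * (z j + x j))\<^sup>2)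
        = (\<Sum>j<N. (\<tau> * (z j - x j) + (1/\<tau>) * (z j + x j))\<^sup>2 - (\<tau> * (z j - x j) - (1/\<tau>) * (z j + x j))\<^sup>2)"
      by (simp only: sum_subtractf)
    also have "\<dots> = (\<Sum>j<N. 4 * ((z j)\<^sup>2 - (x j)\<^sup>2))" by (intro sum.cong refl key)
    also have "\<dots> = 4 * ((\<Sum>j<N. (z j)\<^sup>2) - (\<Sum>j<N. (x j)\<^sup>2))" by (simp add: sum_distrib_left sum_subtractf)
    finally show "(\<Sum>j<N. (\<tau> * (z j - x j) + (1/\<tau>) * (z j + x j))\<^sup>2) - (\<Sum>j<N. (\<tau> * (z j - x j) - (1/\<tau>) * (z j + x j))\<^sup>2) = 4 * ((\<Sum>j<N. (z j)\<^sup>2) - (\<Sum>j<N. (x j)\<^sup>2))" .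
  qed
  have q: "(\<Sum>i\<in>t. (lin a N i (\<lambda>j. \<tau> * (z j - x j) + (1/\<tau>) * (z j + x j)))\<^sup>2) - (\<Sum>i\<in>t. (lin a N i (\<lambda>j. \<tau> * (z j - x j) - (1/\<tau>) * (z j + x j)))\<^sup>2)
     = 4 * ((\<Sum>i\<in>t. (lin a N i z)\<^sup>2) - (\<Sum>i\<in>t. (lin a N i x)\<^sup>2))"
  proof -
    have "(\<Sum>i\<in>t. (lin a N i (\<lambda>j. \<tau> * (z j - x j) + (1/\<tau>) * (z j + x j)))\<^sup>2) - (\<Sum>i\<in>t. (lin a N i (\<lambda>j. \<tau> * (z j - x j) - (1/\<tau>) * (z j + x j)))\<^sup>2)
       = (\<Sum>i\<in>t. (lin a N i (\<lambda>j. \<tau> * (z j - x j) + (1/\<tau>) * (z j + x j)))\<^sup>2 - (lin a N i (\<lambda>j. \<tau> * (z j - x j) - (1/\<tau>) * (z j + x j)))\<^sup>2)"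
      by (simp only: sum_subtractf)
    also have "\<dots> = (\<Sum>i\<in>t. 4 * ((lin a N i z)\<^sup>2 - (lin a N i x)\<^sup>2))"
      by (intro sum.cong refl) (simp only: l1 l2 key)
    also have "\<dots> = 4 * ((\<Sum>i\<in>t. (lin a N i z)\<^sup>2) - (\<Sum>i\<in>t. (lin a N i x)\<^sup>2))" by (simp add: sum_distrib_left sum_subtractf)
    finally show ?thesis .
  qed
  have aux: "(P / n - A) - (Q / n - B) = 4 * ((Z / n - C) - (X / n - D))"
    if "A - B = 4*(C - D)" "P - Q = 4*(Z - X)" for A B C D P Q Z X n :: real
  proof -
    have "P / n - Q / n = 4 * (Z / n - X / n)"
      using that(2) by (metis diff_divide_distrib times_divide_eq_right)
    then show ?thesis using that(1) by (simp add: algebra_simps)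
  qed
  show ?thesis unfolding Qf_def by (rule aux[OF s q])
qed

lemma sqn_parallel:
  fixes \<tau> :: real assumes "\<tau> \<noteq> 0"
  shows "sqn N (\<lambda>j. \<tau> * (z j - x j) + (1/\<tau>) * (z j + x j)) + sqn N (\<lambda>j. \<tau> * (z j - x j) - (1/\<tau>) * (z j + x j))
     = 2 * (\<tau>\<^sup>2 * sqn N (\<lambda>j. z j - x j) + sqn N (\<lambda>j. z j + x j) / \<tau>\<^sup>2)"
proof -
  have key: "(\<tau> * d + (1/\<tau>) * e)\<^sup>2 + (\<tau> * d - (1/\<tau>) * e)\<^sup>2 = 2 * (\<tau>\<^sup>2 * d\<^sup>2 + e\<^sup>2 / \<tau>\<^sup>2)" for d e :: real
    using assms by (simp add: power2_eq_square field_simps)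
  have "(\<Sum>j<N. (\<tau> * (z j - x j) + (1/\<tau>) * (z j + x j))\<^sup>2) + (\<Sum>j<N. (\<tau> * (z j - x j) - (1/\<tau>) * (z j + x j))\<^sup>2)
     = (\<Sum>j<N. (\<tau> * (z j - x j) + (1/\<tau>) * (z j + x j))\<^sup>2 + (\<tau> * (z j - x j) - (1/\<tau>) * (z j + x j))\<^sup>2)"
    by (simp only: sum.distrib)
  also have "\<dots> = (\<Sum>j<N. 2 * (\<tau>\<^sup>2 * (z j - x j)\<^sup>2 + (z j + x j)\<^sup>2 / \<tau>\<^sup>2))" by (intro sum.cong refl key)
  also have "\<dots> = 2 * (\<tau>\<^sup>2 * (\<Sum>j<N. (z j - x j)\<^sup>2) + (\<Sum>j<N. (z j + x j)\<^sup>2) / \<tau>\<^sup>2)"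
    by (simp add: sum_distrib_left sum.distrib sum_divide_distrib)
  finally show ?thesis unfolding sqn_def .
qed

lemma sqn_add_le: "sqn N (\<lambda>j. z j + x j) \<le> 2 * sqn N z + 2 * sqn N x"
proof -
  have "(z j + x j)\<^sup>2 \<le> 2 * (z j)\<^sup>2 + 2 * (x j)\<^sup>2" for j
    using sum_squares_ge_zero[of "z j - x j" 0] by (simp add: power2_eq_square algebra_simps)
  then have "(\<Sum>j<N. (z j + x j)\<^sup>2) \<le> (\<Sum>j<N. 2 * (z j)\<^sup>2 + 2 * (x j)\<^sup>2)" by (intro sum_mono) auto
  then show ?thesis unfolding sqn_def by (simp add: sum.distrib sum_distrib_left)
qed

lemma sqn_diff_le: "sqn N (\<lambda>j. z j) \<le> 2 * sqn N x + 2 * sqn N (\<lambda>j. z j - x j)"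
  using sqn_add_le[of N x "\<lambda>j. z j - x j"] by simp

lemma sqn_minus_commute: "sqn N (\<lambda>j. z j - x j) = sqn N (\<lambda>j. x j - z j)"
  unfolding sqn_def by (simp add: power2_commute)

lemma hstep_sq: "s > 0 \<Longrightarrow> (hstep s)\<^sup>2 = 1 / (100 * real s)"
  unfolding hstep_def by (simp add: power2_eq_square field_simps)

lemma hstep_pos: "s > 0 \<Longrightarrow> hstep s > 0"
  unfolding hstep_def by simp

lemma rounding:
  assumes S: "S \<subseteq> {..<N}" "card S = s" "s > 0"
  and z: "\<And>j. j \<notin> S \<Longrightarrow> z j = 0" "sqn N z = 1"
  shows "\<exists>k\<in>Net S s. sqn N (\<lambda>j. z j - nvec S s k j) \<le> 1/400 \<and> sqn N (nvec S s k) \<le> 2 + 2/400"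
proof -
  have finS: "finite S" using S by (meson finite_lessThan finite_subset)
  define h where "h = hstep s"
  have h: "h > 0" "h\<^sup>2 = 1 / (100 * real s)" using S hstep_sq hstep_pos h_def by auto
  define k where "k = restrict (\<lambda>j. round (z j / h)) S"
  have vk: "nvec S s k j = (if j \<in> S then h * of_int (round (z j / h)) else 0)" for j
    unfolding nvec_def k_def h_def by simp
  have err: "\<bar>z j - nvec S s k j\<bar> \<le> h / 2" for j
  proof (cases "j \<in> S")
    case True
    have "\<bar>of_int (round (z j / h)) - z j / h\<bar> \<le> 1/2" by (rule of_int_round_abs_le)
    then have "h * \<bar>of_int (round (z j / h)) - z j / h\<bar> \<le> h * (1/2)" using h by (intro mult_left_mono) auto
    moreover have "h * \<bar>of_int (round (z j / h)) - z j / h\<bar> = \<bar>z j - h * of_int (round (z j / h))\<bar>"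
    proof -
      have "h * \<bar>of_int (round (z j / h)) - z j / h\<bar> = \<bar>h * (of_int (round (z j / h)) - z j / h)\<bar>"
        using h by (simp add: abs_mult)
      also have "h * (of_int (round (z j / h)) - z j / h) = h * of_int (round (z j / h)) - z j"
        using h by (simp add: field_simps)
      finally show ?thesis by simp
    qed
    ultimately show ?thesis using True h by (simp add: vk)
  next
    case False then show ?thesis using z h by (simp add: vk)
  qed
  have sq_out: "sqn N w = (\<Sum>j\<in>S. (w j)\<^sup>2)" if "\<And>j. j \<notin> S \<Longrightarrow> w j = 0" for w
    unfolding sqn_def using S that by (intro sum.mono_neutral_right) auto
  have d1: "sqn N (\<lambda>j. z j - nvec S s k j) \<le> 1/400"
  proof -
    have "sqn N (\<lambda>j. z j - nvec S s k j) = (\<Sum>j\<in>S. (z j - nvec S s k j)\<^sup>2)"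
      by (rule sq_out) (simp add: z vk)
    also have "\<dots> \<le> (\<Sum>j\<in>S. (h/2)\<^sup>2)"
      by (intro sum_mono) (use err in \<open>simp add: abs_le_square_iff[symmetric]\<close>, use h err in \<open>auto intro: power_mono[of "\<bar>_\<bar>", simplified]\<close>)
    also have "\<dots> = real s * h\<^sup>2 / 4" using S by (simp add: power_divide)
    also have "\<dots> = 1/400" using h S by simp
    finally show ?thesis .
  qed
  have d2: "sqn N (nvec S s k) \<le> 2 + 2/400"
    using sqn_diff_le[of N "nvec S s k" z] d1 z sqn_minus_commute[of N z "nvec S s k"] by simp
  have zj: "\<bar>z j\<bar> \<le> 1" for j
  proof (cases "j < N")
    case True
    have "(z j)\<^sup>2 \<le> sqn N z" unfolding sqn_def using True
      by (intro member_le_sum) auto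
    then show ?thesis using z by (simp add: abs_square_le_1)
  next
    case False then have "j \<notin> S" using S by auto
    then show ?thesis using z by simp
  qed
  have sqrt_le: "sqrt (real s) \<le> real s"
  proof -
    have s1: "1 \<le> real s" using S by simp
    then have "1 \<le> sqrt (real s)" by simp
    then have "sqrt (real s) * 1 \<le> sqrt (real s) * sqrt (real s)" by (intro mult_left_mono) auto
    then show ?thesis using s1 by simp
  qed
  have kb: "\<bar>k j\<bar> \<le> int (11 * s)" if "j \<in> S" for j
  proof -
    have "\<bar>real_of_int (round (z j / h))\<bar> \<le> \<bar>z j / h\<bar> + 1/2"
      using of_int_round_abs_le[of "z j / h"] by linarith
    also have "\<bar>z j / h\<bar> \<le> 1 / h" using zj h by (simp add: divide_right_mono abs_divide)
    also have "1 / h = 10 * sqrt (real s)" unfolding h_def hstep_def by simp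
    finally have "\<bar>real_of_int (round (z j / h))\<bar> \<le> 10 * real s + 1/2" using sqrt_le by linarith
    also have "\<dots> \<le> 11 * real s" using S by simp
    finally have "real_of_int \<bar>round (z j / h)\<bar> \<le> real_of_int (int (11 * s))" by simp
    then show ?thesis using that unfolding k_def by (simp only: of_int_le_iff restrict_apply) simp
  qed
  have ks: "(\<Sum>j\<in>S. (real_of_int (k j))\<^sup>2) \<le> 201 * real s"
  proof -
    have "sqn N (nvec S s k) = (\<Sum>j\<in>S. (h * real_of_int (k j))\<^sup>2)"
      by (subst sq_out) (auto simp: nvec_def h_def)
    also have "\<dots> = h\<^sup>2 * (\<Sum>j\<in>S. (real_of_int (k j))\<^sup>2)"
      by (simp add: power_mult_distrib sum_distrib_left)
    finally have "h\<^sup>2 * (\<Sum>j\<in>S. (real_of_int (k j))\<^sup>2) \<le> 2 + 2/400" using d2 by simp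
    then have "(\<Sum>j\<in>S. (real_of_int (k j))\<^sup>2) \<le> (2 + 2/400) * (100 * real s)"
      using h S by (simp add: field_simps)
    then show ?thesis using S by simp
  qed
  have "k \<in> Net S s" unfolding Net_def using kb ks by (auto simp: k_def abs_le_iff) (smt (verit))
  then show ?thesis using d1 d2 by blast
qed


lemma Qf_zero:
  assumes "\<And>j. j < N \<Longrightarrow> w j = 0"
  shows "Qf a t N w = 0"
proof -
  have "lin a N i w = 0" for i unfolding lin_def using assms by simp
  moreover have "sqn N w = 0" unfolding sqn_def using assms by simp
  ultimately show ?thesis unfolding Qf_def by simp
qed

lemma net_det:
  assumes S: "S \<subseteq> {..<N}" "card S = s" "s > 0" and eta: "0 \<le> \<eta>"
  and net: "\<And>k. k \<in> Net S s \<Longrightarrow> \<bar>Qf a t N (nvec S s k)\<bar> \<le> \<eta> * sqn N (nvec S s k)"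
  and z: "\<And>j. j \<notin> S \<Longrightarrow> z j = 0" "sqn N z = 1"
  shows "\<bar>Qf a t N z\<bar> \<le> 3 * \<eta>"
proof -
  define Z where "Z = {z. (\<forall>j. j \<notin> S \<longrightarrow> z j = 0) \<and> sqn N z = 1}"
  define U where "U = (\<lambda>z. \<bar>Qf a t N z\<bar>) ` Z"
  define M where "M = Sup U"
  have finS: "finite S" using S by (meson finite_lessThan finite_subset)
  have unit_bound: "\<bar>w j\<bar> \<le> 1" if "w \<in> Z" for w j
  proof (cases "j < N")
    case True
    have "(w j)\<^sup>2 \<le> sqn N w" unfolding sqn_def using True by (intro member_le_sum) auto
    then show ?thesis using that by (simp add: Z_def abs_square_le_1)
  next
    case False then have "j \<notin> S" using S by auto
    then show ?thesis using that by (simp add: Z_def)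
  qed
  define B where "B = (\<Sum>i\<in>t. (\<Sum>j<N. \<bar>a i j\<bar>)\<^sup>2) / real (card t) + 1"
  have bdd: "bdd_above U"
  proof (rule bdd_aboveI[of _ B])
    fix u assume "u \<in> U"
    then obtain w where w: "w \<in> Z" "u = \<bar>Qf a t N w\<bar>" unfolding U_def by auto
    have li: "(lin a N i w)\<^sup>2 \<le> (\<Sum>j<N. \<bar>a i j\<bar>)\<^sup>2" for i
    proof -
      have "\<bar>lin a N i w\<bar> \<le> (\<Sum>j<N. \<bar>a i j * w j\<bar>)" unfolding lin_def by (rule sum_abs)
      also have "\<dots> \<le> (\<Sum>j<N. \<bar>a i j\<bar>)"
        by (intro sum_mono) (use unit_bound[OF w(1)] in \<open>auto simp: abs_mult intro: mult_left_le\<close>)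
      finally show ?thesis by (simp add: abs_le_square_iff[symmetric])
    qed
    have "0 \<le> (\<Sum>i\<in>t. (lin a N i w)\<^sup>2) / real (card t)" by (intro divide_nonneg_nonneg sum_nonneg) auto
    moreover have "(\<Sum>i\<in>t. (lin a N i w)\<^sup>2) / real (card t) \<le> (\<Sum>i\<in>t. (\<Sum>j<N. \<bar>a i j\<bar>)\<^sup>2) / real (card t)"
      by (intro divide_right_mono sum_mono li) auto
    ultimately show "u \<le> B" using w unfolding Qf_def B_def Z_def by auto
  qed
  obtain j0 where j0: "j0 \<in> S" using S by (metis card.empty ex_in_conv less_irrefl)
  define e0 where "e0 = (\<lambda>j. if j = j0 then (1::real) else 0)"
  have "(\<Sum>j<N. (e0 j)\<^sup>2) = (\<Sum>j<N. if j = j0 then 1 else 0)"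
    by (intro sum.cong) (auto simp: e0_def)
  also have "\<dots> = 1" using j0 S by (auto simp: subset_iff)
  finally have "e0 \<in> Z" using j0 S unfolding Z_def sqn_def by (auto simp: e0_def)
  then have Une: "U \<noteq> {}" unfolding U_def by auto
  have M0: "0 \<le> M" unfolding M_def using \<open>e0 \<in> Z\<close> bdd
    by (intro cSup_upper2[of "\<bar>Qf a t N e0\<bar>"]) (auto simp: U_def)
  have F1: "\<bar>Qf a t N w\<bar> \<le> M * sqn N w" if w: "\<And>j. j \<notin> S \<Longrightarrow> w j = 0" for w
  proof (cases "sqn N w = 0")
    case True
    then have "\<forall>j\<in>{..<N}. (w j)\<^sup>2 = 0" unfolding sqn_def by (subst (asm) sum_nonneg_eq_0_iff) auto
    then have "Qf a t N w = 0" by (intro Qf_zero) auto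
    then show ?thesis using True by simp
  next
    case False
    define \<sigma> where "\<sigma> = sqn N w"
    have sp: "\<sigma> > 0" using False sqn_nonneg[of N w] unfolding \<sigma>_def by linarith
    define u where "u = (\<lambda>j. (1 / sqrt \<sigma>) * w j)"
    have "sqn N u = 1" unfolding u_def sqn_scale using sp by (simp add: \<sigma>_def power_divide)
    then have "u \<in> Z" unfolding Z_def u_def using w by auto
    then have "\<bar>Qf a t N u\<bar> \<le> M" unfolding M_def using bdd by (intro cSup_upper) (auto simp: U_def)
    moreover have "w = (\<lambda>j. sqrt \<sigma> * u j)" unfolding u_def using sp by auto
    then have "Qf a t N w = \<sigma> * Qf a t N u" using sp by (simp add: Qf_scale)
    ultimately show ?thesis using sp by (simp add: abs_mult \<sigma>_def mult.commute)
  qed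
  have F2: "\<bar>Qf a t N y\<bar> \<le> (2 + 2/400) * \<eta> + M / 8" if y: "y \<in> Z" for y
  proof -
    from y have yS: "\<And>j. j \<notin> S \<Longrightarrow> y j = 0" and y1: "sqn N y = 1" by (auto simp: Z_def)
    obtain k where k: "k \<in> Net S s" "sqn N (\<lambda>j. y j - nvec S s k j) \<le> 1/400" "sqn N (nvec S s k) \<le> 2 + 2/400"
      using rounding[OF S yS y1] by blast
    define x where "x = nvec S s k"
    have xS: "x j = 0" if "j \<notin> S" for j using that by (simp add: x_def nvec_def)
    have qx: "\<bar>Qf a t N x\<bar> \<le> (2 + 2/400) * \<eta>"
    proof -
      have "\<eta> * sqn N (nvec S s k) \<le> \<eta> * (2 + 2/400)" using k(3) eta by (intro mult_left_mono) auto
      then show ?thesis using net[OF k(1)] unfolding x_def by (simp add: mult.commute)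
    qed
    define \<tau> :: real where "\<tau> = 7"
    define ap where "ap = (\<lambda>j. \<tau> * (y j - x j) + (1/\<tau>) * (y j + x j))"
    define bp where "bp = (\<lambda>j. \<tau> * (y j - x j) - (1/\<tau>) * (y j + x j))"
    have pol: "Qf a t N ap - Qf a t N bp = 4 * (Qf a t N y - Qf a t N x)"
      unfolding ap_def bp_def by (rule Qf_polar) (simp add: \<tau>_def)
    have par: "sqn N ap + sqn N bp = 2 * (\<tau>\<^sup>2 * sqn N (\<lambda>j. y j - x j) + sqn N (\<lambda>j. y j + x j) / \<tau>\<^sup>2)"
      unfolding ap_def bp_def by (rule sqn_parallel) (simp add: \<tau>_def)
    have qa: "\<bar>Qf a t N ap\<bar> \<le> M * sqn N ap" by (rule F1) (simp add: ap_def yS xS)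
    have qb: "\<bar>Qf a t N bp\<bar> \<le> M * sqn N bp" by (rule F1) (simp add: bp_def yS xS)
    have spl: "sqn N (\<lambda>j. y j + x j) \<le> 2 + 2 * (2 + 2/400)"
      using sqn_add_le[of N y x] y1 k(3) unfolding x_def by simp
    have smi: "sqn N (\<lambda>j. y j - x j) \<le> 1/400" using k(2) unfolding x_def by simp
    have "sqn N ap + sqn N bp \<le> 2 * (49 * (1/400) + (2 + 2 * (2 + 2/400)) / 49)"
      unfolding par \<tau>_def using smi spl by (intro mult_left_mono add_mono divide_right_mono) auto
    also have "\<dots> \<le> 1/2" by simp
    finally have ab: "sqn N ap + sqn N bp \<le> 1/2" .
    have "4 * \<bar>Qf a t N y - Qf a t N x\<bar> \<le> \<bar>Qf a t N ap\<bar> + \<bar>Qf a t N bp\<bar>"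
      using pol by (smt (verit, best) abs_triangle_ineq4 abs_mult_pos)
    also have "\<dots> \<le> M * (sqn N ap + sqn N bp)" using qa qb by (simp add: distrib_left)
    also have "\<dots> \<le> M * (1/2)" using ab M0 by (intro mult_left_mono) auto
    finally have "\<bar>Qf a t N y - Qf a t N x\<bar> \<le> M / 8" by simp
    then show ?thesis using qx by linarith
  qed
  have "Sup U \<le> (2 + 2/400) * \<eta> + M / 8"
    using Une F2 by (intro cSup_least) (auto simp: U_def)
  then have "M \<le> (2 + 2/400) * \<eta> + M / 8" unfolding M_def .
  then have M3: "M \<le> 3 * \<eta>" using eta by (simp add: field_simps)
  have "z \<in> Z" using z by (auto simp: Z_def)
  then have "\<bar>Qf a t N z\<bar> \<le> M" unfolding M_def using bdd by (intro cSup_upper) (auto simp: U_def)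
  then show ?thesis using M3 by linarith
qed

lemma sq_norm_image_scale: "sq_norm_image B I N (\<lambda>j. c * z j) = c\<^sup>2 * sq_norm_image B I N z"
proof -
  have "(\<Sum>j<N. B i j * (c * z j)) = c * (\<Sum>j<N. B i j * z j)" for i
    by (simp add: sum_distrib_left mult.left_commute)
  note e = this
  have "(\<Sum>i\<in>I. (\<Sum>j<N. B i j * (c * z j))\<^sup>2) = (\<Sum>i\<in>I. c\<^sup>2 * (\<Sum>j<N. B i j * z j)\<^sup>2)"
    by (intro sum.cong refl) (simp only: e power_mult_distrib)
  then show ?thesis unfolding sq_norm_image_def by (simp only: sum_distrib_left[symmetric])
qed

lemma sq_norm_image_cong:
  assumes "\<And>j. j < N \<Longrightarrow> z j = w j"
  shows "sq_norm_image B I N z = sq_norm_image B I N w"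
  unfolding sq_norm_image_def using assms by simp

lemma sq_norm_image_zero:
  assumes "\<And>j. j < N \<Longrightarrow> z j = 0"
  shows "sq_norm_image B I N z = 0"
  unfolding sq_norm_image_def using assms by simp

lemma sparse_unit_bound: "sparse_unit N s z \<Longrightarrow> \<bar>z j\<bar> \<le> 1"
proof (cases "j < N")
  case True
  assume z: "sparse_unit N s z"
  have "(z j)\<^sup>2 \<le> (\<Sum>j<N. (z j)\<^sup>2)" using True by (intro member_le_sum) auto
  then show ?thesis using z by (simp add: sparse_unit_def abs_square_le_1)
next
  case False
  assume z: "sparse_unit N s z"
  then show ?thesis using False by (simp add: sparse_unit_def)
qed

lemma sparse_unit_exists:
  assumes "N > 0" "s > 0"
  shows "sparse_unit N s (\<lambda>j. if j = 0 then 1 else 0)"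
proof -
  have "(\<Sum>j<N. ((\<lambda>j. if j = 0 then 1 else 0::real) j)\<^sup>2) = (\<Sum>j<N. if j = 0 then 1 else 0)"
    by (intro sum.cong) auto
  also have "\<dots> = 1" using assms by simp
  finally show ?thesis using assms unfolding sparse_unit_def
    by (auto intro: order.trans[OF card_mono[of "{0}"]])
qed

definition ricset :: "(nat \<Rightarrow> nat \<Rightarrow> real) \<Rightarrow> nat set \<Rightarrow> nat \<Rightarrow> nat \<Rightarrow> real set" where
  "ricset B I N s = {d. \<forall>z. sparse_unit N s z \<longrightarrow>
       1 - d \<le> sq_norm_image B I N z \<and> sq_norm_image B I N z \<le> 1 + d}"

lemma ric_ricset: "ric B I N s = Inf (ricset B I N s)"
  unfolding ric_def ricset_def ..

lemma ricset_bdd: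
  assumes "N > 0" "s > 0"
  shows "bdd_below (ricset B I N s)"
proof (rule bdd_belowI[of _ 0])
  fix d assume "d \<in> ricset B I N s"
  then have "1 - d \<le> sq_norm_image B I N (\<lambda>j. if j = 0 then 1 else 0)"
       "sq_norm_image B I N (\<lambda>j. if j = 0 then 1 else 0) \<le> 1 + d"
    using sparse_unit_exists[OF assms] unfolding ricset_def by blast+
  then show "0 \<le> d" by linarith
qed

lemma ricset_up: "d \<in> ricset B I N s \<Longrightarrow> d \<le> d' \<Longrightarrow> d' \<in> ricset B I N s"
  unfolding ricset_def by force

lemma ricset_ne: "ricset B I N s \<noteq> {}"
proof -
  define Bd where "Bd = (\<Sum>i\<in>I. (\<Sum>j<N. \<bar>B i j\<bar>)\<^sup>2)"
  have "\<bar>sq_norm_image B I N z - 1\<bar> \<le> Bd + 1" if "sparse_unit N s z" for z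
  proof -
    have li: "(\<Sum>j<N. B i j * z j)\<^sup>2 \<le> (\<Sum>j<N. \<bar>B i j\<bar>)\<^sup>2" for i
    proof -
      have "\<bar>\<Sum>j<N. B i j * z j\<bar> \<le> (\<Sum>j<N. \<bar>B i j * z j\<bar>)" by (rule sum_abs)
      also have "\<dots> \<le> (\<Sum>j<N. \<bar>B i j\<bar>)"
        by (intro sum_mono) (use sparse_unit_bound[OF that] in \<open>auto simp: abs_mult intro: mult_left_le\<close>)
      finally show ?thesis by (simp add: abs_le_square_iff[symmetric])
    qed
    have "0 \<le> sq_norm_image B I N z" unfolding sq_norm_image_def by (auto intro: sum_nonneg)
    moreover have "sq_norm_image B I N z \<le> Bd" unfolding sq_norm_image_def Bd_def
      by (cases "finite I") (auto intro: sum_mono li)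
    ultimately show ?thesis by linarith
  qed
  then have "Bd + 1 \<in> ricset B I N s" unfolding ricset_def by (force simp: abs_le_iff)
  then show ?thesis by blast
qed

lemma ric_le:
  assumes "N > 0" "s > 0"
  and "\<And>z. sparse_unit N s z \<Longrightarrow> \<bar>sq_norm_image B I N z - 1\<bar> \<le> d"
  shows "ric B I N s \<le> d"
proof -
  have "d \<in> ricset B I N s" unfolding ricset_def using assms(3) by (force simp: abs_le_iff)
  then show ?thesis unfolding ric_ricset by (intro cInf_lower ricset_bdd assms)
qed

definition rv :: "nat \<Rightarrow> rat list \<Rightarrow> nat \<Rightarrow> real" where
  "rv N l = (\<lambda>j. if j < length l \<and> j < N then of_rat (l ! j) else 0)"

definition ratcond :: "(nat \<Rightarrow> nat \<Rightarrow> real) \<Rightarrow> nat set \<Rightarrow> nat \<Rightarrow> nat \<Rightarrow> rat \<Rightarrow> bool" where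
  "ratcond B I N s r \<longleftrightarrow> (\<forall>l. card {j\<in>{..<N}. rv N l j \<noteq> 0} \<le> s \<longrightarrow>
      (1 - of_rat r) * sqn N (rv N l) \<le> sq_norm_image B I N (rv N l) \<and>
      sq_norm_image B I N (rv N l) \<le> (1 + of_rat r) * sqn N (rv N l))"

lemma ratcond_of_ricset:
  assumes "of_rat r \<in> ricset B I N s"
  shows "ratcond B I N s r"
  unfolding ratcond_def
proof (intro allI impI)
  fix l assume card: "card {j\<in>{..<N}. rv N l j \<noteq> 0} \<le> s"
  define v where "v = rv N l"
  show "(1 - of_rat r) * sqn N (rv N l) \<le> sq_norm_image B I N (rv N l) \<and>
      sq_norm_image B I N (rv N l) \<le> (1 + of_rat r) * sqn N (rv N l)"
  proof (cases "sqn N v = 0")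
    case True
    then have "\<forall>j\<in>{..<N}. (v j)\<^sup>2 = 0" unfolding sqn_def by (subst (asm) sum_nonneg_eq_0_iff) auto
    then have "sq_norm_image B I N v = 0" by (intro sq_norm_image_zero) auto
    then show ?thesis using True by (simp add: v_def)
  next
    case False
    define \<sigma> where "\<sigma> = sqn N v"
    have sp: "\<sigma> > 0" using False sqn_nonneg[of N v] unfolding \<sigma>_def by linarith
    define u where "u = (\<lambda>j. (1 / sqrt \<sigma>) * v j)"
    have u1: "sqn N u = 1" unfolding u_def sqn_scale using sp by (simp add: \<sigma>_def power_divide)
    have "{j\<in>{..<N}. u j \<noteq> 0} = {j\<in>{..<N}. rv N l j \<noteq> 0}" using sp by (auto simp: u_def v_def)
    then have "sparse_unit N s u" using u1 card unfolding sparse_unit_def sqn_def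
      by (auto simp: u_def v_def rv_def)
    then have ineq: "1 - of_rat r \<le> sq_norm_image B I N u" "sq_norm_image B I N u \<le> 1 + of_rat r"
      using assms unfolding ricset_def by blast+
    have "v = (\<lambda>j. sqrt \<sigma> * u j)" unfolding u_def using sp by auto
    then have "sq_norm_image B I N v = \<sigma> * sq_norm_image B I N u" using sp by (simp add: sq_norm_image_scale)
    then show ?thesis using ineq sp unfolding \<sigma>_def v_def
      by (auto simp: mult.commute intro: mult_right_mono)
  qed
qed

definition qapprox :: "nat \<Rightarrow> real \<Rightarrow> rat" where
  "qapprox k x = (SOME q. x < of_rat q \<and> of_rat q < x + inverse (real (Suc k)))"

lemma qapprox: "x < of_rat (qapprox k x) \<and> of_rat (qapprox k x) < x + inverse (real (Suc k))"
proof -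
  have "x < x + inverse (real (Suc k))" by simp
  then obtain r where "r \<in> \<rat>" "x < r" "r < x + inverse (real (Suc k))" using Rats_dense_in_real by blast
  then obtain q where "x < of_rat q \<and> of_rat q < x + inverse (real (Suc k))" by (metis Rats_cases)
  then show ?thesis unfolding qapprox_def by (rule someI)
qed

lemma qapprox_lim: "(\<lambda>k. real_of_rat (qapprox k x)) \<longlonglongrightarrow> x"
proof (rule tendsto_sandwich[of "\<lambda>k. x" _ _ "\<lambda>k. x + inverse (real (Suc k))"])
  show "\<forall>\<^sub>F k in sequentially. x \<le> real_of_rat (qapprox k x)"
    by (intro always_eventually allI) (meson qapprox less_imp_le)
  show "\<forall>\<^sub>F k in sequentially. real_of_rat (qapprox k x) \<le> x + inverse (real (Suc k))"
    by (intro always_eventually allI) (meson qapprox less_imp_le)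
  show "(\<lambda>k. x) \<longlonglongrightarrow> x" by simp
  show "(\<lambda>k. x + inverse (real (Suc k))) \<longlonglongrightarrow> x" by (rule LIMSEQ_inverse_real_of_nat_add)
qed

lemma ricset_of_ratcond:
  assumes "ratcond B I N s r"
  shows "of_rat r \<in> ricset B I N s"
  unfolding ricset_def mem_Collect_eq
proof (intro allI impI)
  fix z assume z: "sparse_unit N s z"
  define l where "l = (\<lambda>k. map (\<lambda>j. if z j = 0 then 0 else qapprox k (z j)) [0..<N])"
  have rvl: "rv N (l k) j = (if j < N then (if z j = 0 then 0 else of_rat (qapprox k (z j))) else 0)" for k j
    by (auto simp: rv_def l_def)
  have lim: "(\<lambda>k. rv N (l k) j) \<longlonglongrightarrow> z j" if "j < N" for j
    using that by (cases "z j = 0") (auto simp: rvl qapprox_lim)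
  have sub: "{j\<in>{..<N}. rv N (l k) j \<noteq> 0} \<subseteq> {j\<in>{..<N}. z j \<noteq> 0}" for k by (auto simp: rvl)
  have fin: "finite {j\<in>{..<N}. z j \<noteq> 0}" by simp
  have "card {j\<in>{..<N}. rv N (l k) j \<noteq> 0} \<le> s" for k
    using card_mono[OF fin sub[of k]] z unfolding sparse_unit_def by linarith
  then have ineq: "(1 - of_rat r) * sqn N (rv N (l k)) \<le> sq_norm_image B I N (rv N (l k))"
     "sq_norm_image B I N (rv N (l k)) \<le> (1 + of_rat r) * sqn N (rv N (l k))" for k
    using assms unfolding ratcond_def by blast+
  have l1: "(\<lambda>k. sqn N (rv N (l k))) \<longlonglongrightarrow> sqn N z"
    unfolding sqn_def by (rule tendsto_sum, rule tendsto_power, rule lim) simp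
  have l2: "(\<lambda>k. sq_norm_image B I N (rv N (l k))) \<longlonglongrightarrow> sq_norm_image B I N z"
    unfolding sq_norm_image_def
    by (rule tendsto_sum, rule tendsto_power, rule tendsto_sum, rule tendsto_mult[OF tendsto_const], rule lim) simp
  have sz: "sqn N z = 1" using z unfolding sparse_unit_def sqn_def by auto
  have "(1 - of_rat r) * sqn N z \<le> sq_norm_image B I N z"
    by (rule tendsto_le[OF _ l2 tendsto_mult[OF tendsto_const l1]]) (auto intro: always_eventually ineq)
  moreover have "sq_norm_image B I N z \<le> (1 + of_rat r) * sqn N z"
    by (rule tendsto_le[OF _ tendsto_mult[OF tendsto_const l1] l2]) (auto intro: always_eventually ineq)
  ultimately show "1 - real_of_rat r \<le> sq_norm_image B I N z \<and> sq_norm_image B I N z \<le> 1 + real_of_rat r"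
    using sz by simp
qed

lemma ric_lt_iff:
  assumes "N > 0" "s > 0"
  shows "ric B I N s < \<delta> \<longleftrightarrow> (\<exists>r. of_rat r < \<delta> \<and> ratcond B I N s r)"
proof
  assume "ric B I N s < \<delta>"
  then obtain d where d: "d \<in> ricset B I N s" "d < \<delta>"
    using cInf_lessD[OF ricset_ne] unfolding ric_ricset by blast
  obtain x where "x \<in> \<rat>" "d < x" "x < \<delta>" using Rats_dense_in_real[OF d(2)] by blast
  then obtain r where r: "d < of_rat r" "of_rat r < \<delta>" by (metis Rats_cases)
  have "of_rat r \<in> ricset B I N s" using ricset_up[OF d(1)] r by auto
  then show "\<exists>r. of_rat r < \<delta> \<and> ratcond B I N s r" using r ratcond_of_ricset by blast
next
  assume "\<exists>r. of_rat r < \<delta> \<and> ratcond B I N s r"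
  then obtain r where r: "of_rat r < \<delta>" "ratcond B I N s r" by blast
  have "ric B I N s \<le> of_rat r" unfolding ric_ricset
    by (intro cInf_lower ricset_bdd assms ricset_of_ratcond r)
  then show "ric B I N s < \<delta>" using r by linarith
qed

locale subg = prob_space +
  fixes A :: "'a \<Rightarrow> nat \<Rightarrow> nat \<Rightarrow> real" and m N :: nat and c :: real
  assumes indepA: "indep_vars (\<lambda>_. borel) (\<lambda>(i,j) \<omega>. A \<omega> i j) ({..<m} \<times> {..<N})"
  and int1: "\<And>i j. i < m \<Longrightarrow> j < N \<Longrightarrow> integrable M (\<lambda>\<omega>. A \<omega> i j)"
  and int2: "\<And>i j. i < m \<Longrightarrow> j < N \<Longrightarrow> integrable M (\<lambda>\<omega>. (A \<omega> i j)\<^sup>2)"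
  and mean0: "\<And>i j. i < m \<Longrightarrow> j < N \<Longrightarrow> (\<integral>\<omega>. A \<omega> i j \<partial>M) = 0"
  and var1: "\<And>i j. i < m \<Longrightarrow> j < N \<Longrightarrow> (\<integral>\<omega>. (A \<omega> i j)\<^sup>2 \<partial>M) = 1"
  and mgf: "\<And>i j \<theta>. i < m \<Longrightarrow> j < N \<Longrightarrow>
      (\<integral>\<^sup>+\<omega>. ennreal (exp (\<theta> * A \<omega> i j)) \<partial>M) \<le> ennreal (exp (c * \<theta>\<^sup>2))"
  and c_pos: "c > 0"
begin

lemma indep_pairs: "indep_vars (\<lambda>_. borel) (\<lambda>p \<omega>. A \<omega> (fst p) (snd p)) ({..<m} \<times> {..<N})"
proof -
  have "(\<lambda>(i,j) \<omega>. A \<omega> i j) = (\<lambda>p \<omega>. A \<omega> (fst p) (snd p))" by (auto simp: fun_eq_iff split_beta)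
  then show ?thesis using indepA by simp
qed

lemma rvA[measurable]: "i < m \<Longrightarrow> j < N \<Longrightarrow> (\<lambda>\<omega>. A \<omega> i j) \<in> borel_measurable M"
  using indep_pairs unfolding indep_vars_def by force

lemma rv_lin[measurable]: "i < m \<Longrightarrow> (\<lambda>\<omega>. lin (A \<omega>) N i u) \<in> borel_measurable M"
  unfolding lin_def by (intro borel_measurable_sum borel_measurable_times rvA) auto

lemma row_pairs: "{i} \<times> {..<N} = Pair i ` {..<N}" by auto

lemma mgf_lin:
  assumes i: "i < m"
  shows "(\<integral>\<^sup>+\<omega>. ennreal (exp (\<theta> * lin (A \<omega>) N i u)) \<partial>M) \<le> ennreal (exp (c * \<theta>\<^sup>2 * sqn N u))"
proof -
  let ?I = "{i} \<times> {..<N}"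
  have fin: "finite ?I" by simp
  have sum_eq: "(\<Sum>p\<in>?I. f p) = (\<Sum>j<N. f (i, j))" for f :: "nat \<times> nat \<Rightarrow> real"
    unfolding row_pairs by (subst sum.reindex) (auto simp: inj_on_def)
  have prod_eq: "(\<Prod>p\<in>?I. f p) = (\<Prod>j<N. f (i, j))" for f :: "nat \<times> nat \<Rightarrow> ennreal"
    unfolding row_pairs by (subst prod.reindex) (auto simp: inj_on_def)
  have ind: "indep_vars (\<lambda>_. borel) (\<lambda>p \<omega>. ennreal (exp (\<theta> * u (snd p) * A \<omega> (fst p) (snd p)))) ?I"
    using indep_vars_compose2[OF indep_vars_subset[OF indep_pairs, of ?I],
        of "\<lambda>p x. ennreal (exp (\<theta> * u (snd p) * x))" "\<lambda>_. borel"] i by auto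
  have "(\<integral>\<^sup>+\<omega>. ennreal (exp (\<theta> * lin (A \<omega>) N i u)) \<partial>M)
      = (\<integral>\<^sup>+\<omega>. (\<Prod>p\<in>?I. ennreal (exp (\<theta> * u (snd p) * A \<omega> (fst p) (snd p)))) \<partial>M)"
  proof (intro nn_integral_cong)
    fix \<omega>
    have "\<theta> * lin (A \<omega>) N i u = (\<Sum>p\<in>?I. \<theta> * u (snd p) * A \<omega> (fst p) (snd p))"
      unfolding lin_def sum_eq by (simp add: sum_distrib_left mult_ac)
    then show "ennreal (exp (\<theta> * lin (A \<omega>) N i u)) = (\<Prod>p\<in>?I. ennreal (exp (\<theta> * u (snd p) * A \<omega> (fst p) (snd p))))"
      by (simp add: exp_sum[OF fin] prod_ennreal)
  qed
  also have "\<dots> = (\<Prod>p\<in>?I. \<integral>\<^sup>+\<omega>. ennreal (exp (\<theta> * u (snd p) * A \<omega> (fst p) (snd p))) \<partial>M)"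
    by (rule indep_vars_nn_integral[OF fin ind]) simp
  also have "\<dots> \<le> (\<Prod>p\<in>?I. ennreal (exp (c * (\<theta> * u (snd p))\<^sup>2)))"
    by (intro prod_mono_ennreal) (use mgf i in auto)
  also have "\<dots> = ennreal (exp (\<Sum>p\<in>?I. c * (\<theta> * u (snd p))\<^sup>2))"
    by (simp add: prod_ennreal exp_sum[OF fin])
  also have "(\<Sum>p\<in>?I. c * (\<theta> * u (snd p))\<^sup>2) = c * \<theta>\<^sup>2 * sqn N u"
    unfolding sum_eq sqn_def by (simp add: sum_distrib_left power_mult_distrib mult_ac)
  finally show ?thesis .
qed

lemma cross_moment:
  assumes i: "i < m" and j: "j < N" and k: "k < N"
  shows "integrable M (\<lambda>\<omega>. A \<omega> i j * A \<omega> i k)"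
    and "(\<integral>\<omega>. A \<omega> i j * A \<omega> i k \<partial>M) = (if j = k then 1 else 0)"
proof -
  have "integrable M (\<lambda>\<omega>. A \<omega> i j * A \<omega> i k) \<and> (\<integral>\<omega>. A \<omega> i j * A \<omega> i k \<partial>M) = (if j = k then 1 else 0)"
  proof (cases "j = k")
    case True
    then show ?thesis using int2[OF i j] var1[OF i j] by (simp add: power2_eq_square)
  next
    case False
    let ?I = "{(i,j), (i,k)}"
    have ind: "indep_vars (\<lambda>_. borel) (\<lambda>p \<omega>. A \<omega> (fst p) (snd p)) ?I"
      by (rule indep_vars_subset[OF indep_pairs]) (use i j k in auto)
    have ints: "\<And>p. p \<in> ?I \<Longrightarrow> integrable M (\<lambda>\<omega>. A \<omega> (fst p) (snd p))" using int1 i j k by auto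
    have pe: "(\<Prod>p\<in>?I. A \<omega> (fst p) (snd p)) = A \<omega> i j * A \<omega> i k" for \<omega> using False by simp
    have "integrable M (\<lambda>\<omega>. \<Prod>p\<in>?I. A \<omega> (fst p) (snd p))"
      by (rule indep_vars_integrable[OF _ ind ints]) auto
    moreover have "(\<integral>\<omega>. (\<Prod>p\<in>?I. A \<omega> (fst p) (snd p)) \<partial>M) = (\<Prod>p\<in>?I. \<integral>\<omega>. A \<omega> (fst p) (snd p) \<partial>M)"
      by (rule indep_vars_lebesgue_integral[OF _ ind ints]) auto
    ultimately show ?thesis using False mean0 i j by (simp add: pe)
  qed
  then show "integrable M (\<lambda>\<omega>. A \<omega> i j * A \<omega> i k)"
    and "(\<integral>\<omega>. A \<omega> i j * A \<omega> i k \<partial>M) = (if j = k then 1 else 0)" by auto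
qed

lemma lin_sq_expand: "(lin (A \<omega>) N i u)\<^sup>2 = (\<Sum>j<N. \<Sum>k<N. (A \<omega> i j * A \<omega> i k) * (u j * u k))"
  unfolding lin_def power2_eq_square sum_product by (simp add: mult_ac)

lemma second_moment:
  assumes i: "i < m"
  shows "integrable M (\<lambda>\<omega>. (lin (A \<omega>) N i u)\<^sup>2)" and "(\<integral>\<omega>. (lin (A \<omega>) N i u)\<^sup>2 \<partial>M) = sqn N u"
proof -
  have ij: "integrable M (\<lambda>\<omega>. (A \<omega> i j * A \<omega> i k) * (u j * u k))" if "j < N" "k < N" for j k
    using cross_moment(1)[OF i that] by simp
  show "integrable M (\<lambda>\<omega>. (lin (A \<omega>) N i u)\<^sup>2)"
    unfolding lin_sq_expand by (rule Bochner_Integration.integrable_sum, rule Bochner_Integration.integrable_sum, rule ij) auto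
  have "(\<integral>\<omega>. (lin (A \<omega>) N i u)\<^sup>2 \<partial>M) = (\<Sum>j<N. \<Sum>k<N. (\<integral>\<omega>. A \<omega> i j * A \<omega> i k \<partial>M) * (u j * u k))"
  proof -
    have "(\<integral>\<omega>. (\<Sum>j<N. \<Sum>k<N. (A \<omega> i j * A \<omega> i k) * (u j * u k)) \<partial>M)
        = (\<Sum>j<N. \<integral>\<omega>. (\<Sum>k<N. (A \<omega> i j * A \<omega> i k) * (u j * u k)) \<partial>M)"
      by (rule Bochner_Integration.integral_sum, rule Bochner_Integration.integrable_sum, rule ij) auto
    also have "\<dots> = (\<Sum>j<N. \<Sum>k<N. \<integral>\<omega>. (A \<omega> i j * A \<omega> i k) * (u j * u k) \<partial>M)"
      by (intro sum.cong refl Bochner_Integration.integral_sum ij) auto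
    also have "\<dots> = (\<Sum>j<N. \<Sum>k<N. (\<integral>\<omega>. A \<omega> i j * A \<omega> i k \<partial>M) * (u j * u k))"
      by simp
    finally show ?thesis unfolding lin_sq_expand .
  qed
  also have "\<dots> = (\<Sum>j<N. \<Sum>k<N. (if j = k then 1 else 0) * (u j * u k))"
    using cross_moment(2)[OF i] by (intro sum.cong) auto
  also have "\<dots> = (\<Sum>j<N. \<Sum>k<N. (if k = j then u j * u k else 0))"
    by (intro sum.cong refl) auto
  also have "\<dots> = sqn N u" unfolding sqn_def by (simp add: power2_eq_square)
  finally show "(\<integral>\<omega>. (lin (A \<omega>) N i u)\<^sup>2 \<partial>M) = sqn N u" .
qed

end

lemma pow_le_cosh:
  fixes y \<theta> :: real assumes "\<theta> > 0"
  shows "y ^ (2*k) \<le> fact (2*k) / \<theta> ^ (2*k) * (exp (\<theta> * y) + exp (-(\<theta> * y)))"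
proof -
  have "(\<theta> * \<bar>y\<bar>) ^ (2*k) / fact (2*k) \<le> exp (\<theta> * \<bar>y\<bar>)"
    by (rule pow_div_fact_le_exp) (use assms in simp)
  also have "exp (\<theta> * \<bar>y\<bar>) \<le> exp (\<theta> * y) + exp (-(\<theta> * y))"
    by (cases "y \<ge> 0") (auto simp: abs_if add_increasing add_increasing2)
  finally have "(\<theta> * \<bar>y\<bar>) ^ (2*k) \<le> fact (2*k) * (exp (\<theta> * y) + exp (-(\<theta> * y)))"
    by (simp add: field_simps)
  moreover have "(\<theta> * \<bar>y\<bar>) ^ (2*k) = \<theta> ^ (2*k) * y ^ (2*k)"
    by (simp add: power_mult_distrib power_even_abs)
  ultimately show ?thesis using assms by (simp add: field_simps)
qed

lemma fact_double_le: "fact (2*k) \<le> (4::real) ^ k * fact k * real k ^ k"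
proof -
  have "fact k * fact k * real (2*k choose k) = fact (2*k)"
    using binomial_fact_lemma[of k "2*k"] by (metis diff_mult_distrib mult_2 add_diff_cancel_left' le_add1 mult_1 of_nat_fact of_nat_mult)
  moreover have "real (2*k choose k) \<le> 4 ^ k"
  proof -
    have "(2*k choose k) \<le> 2 ^ (2*k)" by (rule binomial_le_pow2)
    also have "(2::nat) ^ (2*k) = 4 ^ k" by (simp add: power_mult)
    finally show ?thesis by (metis of_nat_le_iff of_nat_numeral of_nat_power)
  qed
  moreover have "(fact k :: real) \<le> real k ^ k"
    using fact_le_self_pow[of k] by (metis of_nat_fact of_nat_le_iff of_nat_power)
  ultimately have "fact (2*k) \<le> (fact k * real k ^ k) * 4 ^ k"
  proof -
    assume e: "fact k * fact k * real (2*k choose k) = fact (2*k)" and b: "real (2*k choose k) \<le> 4 ^ k"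
      and f: "(fact k :: real) \<le> real k ^ k"
    have "fact k * fact k * real (2*k choose k) \<le> fact k * real k ^ k * 4 ^ k"
      by (intro mult_mono f b) auto
    then show ?thesis using e by simp
  qed
  then show ?thesis by (simp add: mult_ac)
qed

lemma exp_neg_plus: "0 \<le> u \<Longrightarrow> exp (-u) + 2 * u \<le> exp (u::real)"
proof -
  assume u: "0 \<le> u"
  define f where "f = (\<lambda>x::real. exp x - exp (-x) - 2 * x)"
  have "f 0 \<le> f u"
  proof (rule DERIV_nonneg_imp_increasing_open[OF u])
    fix x :: real
    have "(f has_real_derivative (exp x + exp (-x) - 2)) (at x)"
      unfolding f_def by (auto intro!: derivative_eq_intros)
    moreover have "0 \<le> exp x + exp (-x) - 2"
      using exp_ge_add_one_self[of x] exp_ge_add_one_self[of "-x"] by linarith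
    ultimately show "\<exists>y. (f has_real_derivative y) (at x) \<and> 0 \<le> y" by blast
  next
    show "continuous_on {0..u} f" unfolding f_def by (intro continuous_intros)
  qed
  then show ?thesis unfolding f_def by simp
qed

context subg
begin

definition "aconst = 4 * c * exp 1 + 1"

lemma aconst_pos: "aconst \<ge> 1" unfolding aconst_def using c_pos by simp

lemma moment:
  assumes i: "i < m" and u: "sqn N u = 1" and k: "k \<ge> 1"
  shows "(\<integral>\<^sup>+\<omega>. ennreal ((lin (A \<omega>) N i u) ^ (2*k)) \<partial>M) \<le> ennreal (2 * fact (2*k) * (c / real k) ^ k * exp (real k))"
proof -
  define \<theta> where "\<theta> = sqrt (real k / c)"
  have th: "\<theta> > 0" "\<theta>\<^sup>2 = real k / c" using k c_pos by (auto simp: \<theta>_def)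
  have thk: "\<theta> ^ (2*k) = (real k / c) ^ k" by (simp add: power_mult th(2)[symmetric])
  define F where "F = fact (2*k) / \<theta> ^ (2*k)"
  have F0: "F \<ge> 0" using th by (simp add: F_def)
  have "(\<integral>\<^sup>+\<omega>. ennreal ((lin (A \<omega>) N i u) ^ (2*k)) \<partial>M)
     \<le> (\<integral>\<^sup>+\<omega>. ennreal F * (ennreal (exp (\<theta> * lin (A \<omega>) N i u)) + ennreal (exp ((-\<theta>) * lin (A \<omega>) N i u))) \<partial>M)"
  proof (intro nn_integral_mono)
    fix \<omega>
    have "(lin (A \<omega>) N i u) ^ (2*k) \<le> F * (exp (\<theta> * lin (A \<omega>) N i u) + exp ((-\<theta>) * lin (A \<omega>) N i u))"
      using pow_le_cosh[OF th(1)] by (simp add: F_def)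
    then show "ennreal ((lin (A \<omega>) N i u) ^ (2*k)) \<le> ennreal F * (ennreal (exp (\<theta> * lin (A \<omega>) N i u)) + ennreal (exp ((-\<theta>) * lin (A \<omega>) N i u)))"
      using F0 by (simp add: ennreal_mult[symmetric] ennreal_plus[symmetric] del: ennreal_plus)
  qed
  also have "\<dots> = ennreal F * ((\<integral>\<^sup>+\<omega>. ennreal (exp (\<theta> * lin (A \<omega>) N i u)) \<partial>M) + (\<integral>\<^sup>+\<omega>. ennreal (exp ((-\<theta>) * lin (A \<omega>) N i u)) \<partial>M))"
    using i by (simp add: nn_integral_cmult nn_integral_add)
  also have "\<dots> \<le> ennreal F * (ennreal (exp (c * \<theta>\<^sup>2 * sqn N u)) + ennreal (exp (c * (-\<theta>)\<^sup>2 * sqn N u)))"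
    by (intro mult_left_mono add_mono mgf_lin i) auto
  also have "\<dots> = ennreal (F * (2 * exp (real k)))"
    using u th c_pos F0 by (simp add: ennreal_mult ennreal_plus[symmetric] del: ennreal_plus)
  also have "F * (2 * exp (real k)) = 2 * fact (2*k) * (c / real k) ^ k * exp (real k)"
    unfolding F_def thk using k c_pos by (simp add: field_simps power_divide)
  finally show ?thesis .
qed

lemma coef_bound:
  assumes k: "k \<ge> 1" and l: "0 \<le> lam"
  shows "lam ^ k / fact k * (2 * fact (2*k) * (c / real k) ^ k * exp (real k)) \<le> 2 * (lam * aconst) ^ k"
proof -
  have "lam ^ k / fact k * (2 * fact (2*k) * (c / real k) ^ k * exp (real k))
      \<le> lam ^ k / fact k * (2 * (4 ^ k * fact k * real k ^ k) * (c / real k) ^ k * exp (real k))"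
    using fact_double_le[of k] c_pos l by (intro mult_left_mono mult_right_mono) auto
  also have "\<dots> = 2 * (lam * (4 * c * exp 1)) ^ k"
    using k by (simp add: field_simps power_mult_distrib power_divide exp_of_nat_mult[symmetric] mult.commute[of "real k"])
  also have "\<dots> \<le> 2 * (lam * aconst) ^ k"
    unfolding aconst_def using l c_pos by (intro mult_left_mono power_mono mult_left_mono) auto
  finally show ?thesis .
qed

end

lemma exp_series_ennreal:
  "ennreal (exp x) = (\<Sum>n. ennreal (x ^ n / fact n))" if "0 \<le> x" for x :: real
proof -
  have s: "(\<lambda>n. x ^ n / fact n) sums exp x"
    using exp_converges[of x] by (simp add: divide_inverse mult.commute scaleR_conv_of_real)
  then have "(\<Sum>n. ennreal (x ^ n / fact n)) = ennreal (\<Sum>n. x ^ n / fact n)"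
    by (intro suminf_ennreal2) (use that in \<open>auto simp: sums_iff\<close>)
  then show ?thesis using s by (simp add: sums_iff)
qed

lemma gsum:
  fixes x lam :: real assumes x: "0 \<le> x" "x \<le> 1/2"
  defines "g \<equiv> (\<lambda>n. 2 * x ^ n - (if n = 0 then 1 else 0) - (if n = 1 then 2 * x - lam else 0))"
  shows "g sums (2 / (1 - x) - 1 - (2 * x - lam))"
proof -
  have "(\<lambda>n. 2 * x ^ n) sums (2 * (1 / (1 - x)))"
    by (intro sums_mult geometric_sums) (use x in auto)
  moreover have "(\<lambda>n. if n = 0 then 1 else 0) sums (1::real)"
    using sums_single[of 0 "\<lambda>_. 1::real"] by simp
  moreover have "(\<lambda>n. if n = 1 then 2 * x - lam else 0) sums (2 * x - lam)"
    using sums_single[of 1 "\<lambda>_. 2 * x - lam"] by simp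
  ultimately show ?thesis unfolding g_def by (intro sums_diff) auto
qed

context subg
begin

lemma mgf_sq:
  assumes i: "i < m" and u: "sqn N u = 1" and l: "0 \<le> lam" "lam * aconst \<le> 1/2"
  shows "(\<integral>\<^sup>+\<omega>. ennreal (exp (lam * (lin (A \<omega>) N i u)\<^sup>2)) \<partial>M) \<le> ennreal (1 + lam + 4 * aconst\<^sup>2 * lam\<^sup>2)"
proof -
  define x where "x = lam * aconst"
  have x: "0 \<le> x" "x \<le> 1/2" using l aconst_pos by (auto simp: x_def)
  define g where "g = (\<lambda>n. 2 * x ^ n - (if n = 0 then 1 else 0) - (if n = 1 then 2 * x - lam else 0))"
  have gs: "g sums (2 / (1 - x) - 1 - (2 * x - lam))" unfolding g_def by (rule gsum[OF x])
  let ?Y = "\<lambda>\<omega>. lin (A \<omega>) N i u"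
  have term_eq: "(\<integral>\<^sup>+\<omega>. ennreal ((lam * (?Y \<omega>)\<^sup>2) ^ n / fact n) \<partial>M)
        = ennreal (lam ^ n / fact n) * (\<integral>\<^sup>+\<omega>. ennreal ((?Y \<omega>) ^ (2*n)) \<partial>M)" for n
  proof -
    have "(\<integral>\<^sup>+\<omega>. ennreal ((lam * (?Y \<omega>)\<^sup>2) ^ n / fact n) \<partial>M)
        = (\<integral>\<^sup>+\<omega>. ennreal (lam ^ n / fact n) * ennreal ((?Y \<omega>) ^ (2*n)) \<partial>M)"
    proof (intro nn_integral_cong)
      fix \<omega>
      have "(lam * (?Y \<omega>)\<^sup>2) ^ n / fact n = lam ^ n / fact n * (?Y \<omega>) ^ (2*n)"
        by (simp add: power_mult_distrib power_mult)
      then show "ennreal ((lam * (?Y \<omega>)\<^sup>2) ^ n / fact n) = ennreal (lam ^ n / fact n) * ennreal ((?Y \<omega>) ^ (2*n))"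
        using l by (simp add: ennreal_mult[symmetric] power_mult)
    qed
    also have "\<dots> = ennreal (lam ^ n / fact n) * (\<integral>\<^sup>+\<omega>. ennreal ((?Y \<omega>) ^ (2*n)) \<partial>M)"
      using i by (intro nn_integral_cmult) simp
    finally show ?thesis .
  qed
  have term_le: "(\<integral>\<^sup>+\<omega>. ennreal ((lam * (?Y \<omega>)\<^sup>2) ^ n / fact n) \<partial>M) \<le> ennreal (g n)" for n
  proof (cases "n \<ge> 2")
    case True
    have "(\<integral>\<^sup>+\<omega>. ennreal ((lam * (?Y \<omega>)\<^sup>2) ^ n / fact n) \<partial>M)
        \<le> ennreal (lam ^ n / fact n) * ennreal (2 * fact (2*n) * (c / real n) ^ n * exp (real n))"
      unfolding term_eq by (intro mult_left_mono moment i u) (use True in auto)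
    also have "\<dots> = ennreal (lam ^ n / fact n * (2 * fact (2*n) * (c / real n) ^ n * exp (real n)))"
      by (rule ennreal_mult[symmetric]) (use l c_pos in auto)
    also have "\<dots> \<le> ennreal (2 * x ^ n)" unfolding x_def
      by (intro ennreal_leI coef_bound l) (use True in auto)
    also have "2 * x ^ n = g n" using True by (simp add: g_def)
    finally show ?thesis .
  next
    case False
    then consider "n = 0" | "n = 1" by linarith
    then show ?thesis
    proof cases
      case 1
      then show ?thesis by (simp add: g_def emeasure_space_1)
    next
      case 2
      have "(\<integral>\<^sup>+\<omega>. ennreal ((?Y \<omega>)\<^sup>2) \<partial>M) = ennreal (\<integral>\<omega>. (?Y \<omega>)\<^sup>2 \<partial>M)"
        by (rule nn_integral_eq_integral) (use second_moment(1)[OF i] in auto)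
      also have "\<dots> = 1" using second_moment(2)[OF i] u by simp
      finally have "(\<integral>\<^sup>+\<omega>. ennreal ((?Y \<omega>)\<^sup>2) \<partial>M) = 1" .
      then show ?thesis using 2 unfolding term_eq by (simp add: g_def)
    qed
  qed
  have g0: "0 \<le> g n" for n
    using x l by (cases "n = 0"; cases "n = 1") (auto simp: g_def)
  have "(\<integral>\<^sup>+\<omega>. ennreal (exp (lam * (?Y \<omega>)\<^sup>2)) \<partial>M) = (\<integral>\<^sup>+\<omega>. (\<Sum>n. ennreal ((lam * (?Y \<omega>)\<^sup>2) ^ n / fact n)) \<partial>M)"
    using l by (intro nn_integral_cong exp_series_ennreal) simp
  also have "\<dots> = (\<Sum>n. \<integral>\<^sup>+\<omega>. ennreal ((lam * (?Y \<omega>)\<^sup>2) ^ n / fact n) \<partial>M)"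
    using i by (intro nn_integral_suminf) simp
  also have "\<dots> \<le> (\<Sum>n. ennreal (g n))"
    by (intro suminf_le term_le summableI)
  also have "\<dots> = ennreal (\<Sum>n. g n)"
    by (intro suminf_ennreal2 g0) (use gs in \<open>simp add: sums_iff\<close>)
  also have "(\<Sum>n. g n) = 2 / (1 - x) - 1 - (2 * x - lam)" using gs by (simp add: sums_iff)
  also have "\<dots> \<le> 1 + lam + 4 * aconst\<^sup>2 * lam\<^sup>2"
  proof -
    have "2 / (1 - x) - 1 - 2 * x = 1 + 2 * x\<^sup>2 / (1 - x)" using x by (simp add: field_simps power2_eq_square)
    moreover have "2 * x\<^sup>2 / (1 - x) \<le> 4 * x\<^sup>2"
    proof -
      have "(x * 2) * (x * x) \<le> 1 * (x * x)" using x by (intro mult_right_mono) auto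
      then have "x * (2 * (x * x)) \<le> 1 * (x * x)" by (simp add: mult_ac)
      then show ?thesis using x by (simp add: field_simps power2_eq_square)
    qed
    moreover have "x\<^sup>2 = aconst\<^sup>2 * lam\<^sup>2" by (simp add: x_def power_mult_distrib)
    ultimately show ?thesis by linarith
  qed
  finally show ?thesis by (simp add: ennreal_leI)
qed

lemma mgf_negsq:
  assumes i: "i < m" and u: "sqn N u = 1" and l: "0 \<le> lam" "lam * aconst \<le> 1/2"
  shows "(\<integral>\<^sup>+\<omega>. ennreal (exp (- lam * (lin (A \<omega>) N i u)\<^sup>2)) \<partial>M) \<le> ennreal (1 - lam + 4 * aconst\<^sup>2 * lam\<^sup>2)"
proof -
  let ?Y = "\<lambda>\<omega>. lin (A \<omega>) N i u"
  define X where "X = (\<integral>\<^sup>+\<omega>. ennreal (exp (- lam * (?Y \<omega>)\<^sup>2)) \<partial>M)"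
  have Y2: "(\<integral>\<^sup>+\<omega>. ennreal ((?Y \<omega>)\<^sup>2) \<partial>M) = 1"
  proof -
    have "(\<integral>\<^sup>+\<omega>. ennreal ((?Y \<omega>)\<^sup>2) \<partial>M) = ennreal (\<integral>\<omega>. (?Y \<omega>)\<^sup>2 \<partial>M)"
      by (rule nn_integral_eq_integral) (use second_moment(1)[OF i] in auto)
    also have "\<dots> = 1" using second_moment(2)[OF i] u by simp
    finally show ?thesis .
  qed
  have "X + ennreal (2 * lam) = X + ennreal (2 * lam) * (\<integral>\<^sup>+\<omega>. ennreal ((?Y \<omega>)\<^sup>2) \<partial>M)"
    using Y2 by simp
  also have "\<dots> = (\<integral>\<^sup>+\<omega>. ennreal (exp (- lam * (?Y \<omega>)\<^sup>2)) + ennreal (2 * lam) * ennreal ((?Y \<omega>)\<^sup>2) \<partial>M)"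
    unfolding X_def using i by (simp add: nn_integral_add nn_integral_cmult)
  also have "\<dots> \<le> (\<integral>\<^sup>+\<omega>. ennreal (exp (lam * (?Y \<omega>)\<^sup>2)) \<partial>M)"
  proof (intro nn_integral_mono)
    fix \<omega>
    have "exp (- (lam * (?Y \<omega>)\<^sup>2)) + 2 * (lam * (?Y \<omega>)\<^sup>2) \<le> exp (lam * (?Y \<omega>)\<^sup>2)"
      by (rule exp_neg_plus) (use l in simp)
    then show "ennreal (exp (- lam * (?Y \<omega>)\<^sup>2)) + ennreal (2 * lam) * ennreal ((?Y \<omega>)\<^sup>2) \<le> ennreal (exp (lam * (?Y \<omega>)\<^sup>2))"
      using l by (simp add: ennreal_mult[symmetric] ennreal_plus[symmetric] mult.assoc del: ennreal_plus)
  qed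
  also have "\<dots> \<le> ennreal (1 + lam + 4 * aconst\<^sup>2 * lam\<^sup>2)" by (rule mgf_sq[OF i u l])
  finally have le: "X + ennreal (2 * lam) \<le> ennreal (1 + lam + 4 * aconst\<^sup>2 * lam\<^sup>2)" .
  have "X \<le> 1"
  proof -
    have "X \<le> (\<integral>\<^sup>+\<omega>. 1 \<partial>M)" unfolding X_def
      by (intro nn_integral_mono) (use l in \<open>auto simp: mult_nonneg_nonneg\<close>)
    then show ?thesis by (simp add: emeasure_space_1)
  qed
  then have "X \<noteq> \<top>" by (auto simp: top_unique)
  then obtain x where xX: "X = ennreal x" "0 \<le> x" by (cases X) auto
  have "x + 2 * lam \<le> 1 + lam + 4 * aconst\<^sup>2 * lam\<^sup>2"
    using le xX l by (simp add: ennreal_plus[symmetric] del: ennreal_plus)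
  then have "x \<le> 1 - lam + 4 * aconst\<^sup>2 * lam\<^sup>2" by linarith
  then show ?thesis using xX unfolding X_def by (simp add: ennreal_leI)
qed

end

context subg
begin

lemma row_indep:
  assumes t: "t \<subseteq> {..<m}" and F: "F \<in> borel_measurable (borel :: real measure)"
  shows "indep_vars (\<lambda>_. borel) (\<lambda>i \<omega>. F (lin (A \<omega>) N i u)) t"
proof -
  define K where "K = (\<lambda>i::nat. {i} \<times> {..<N})"
  have ir: "indep_vars (\<lambda>i. PiM (K i) (\<lambda>_. borel)) (\<lambda>i \<omega>. restrict (\<lambda>p. A \<omega> (fst p) (snd p)) (K i)) t"
    by (rule indep_vars_restrict[OF indep_pairs]) (use t in \<open>auto simp: K_def disjoint_family_on_def\<close>)
  define Y where "Y = (\<lambda>i (f :: nat \<times> nat \<Rightarrow> real). F (\<Sum>j<N. f (i, j) * u j))"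
  have Ym: "Y i \<in> measurable (PiM (K i) (\<lambda>_. borel)) borel" for i
  proof -
    have "(\<lambda>f. \<Sum>j<N. f (i, j) * u j) \<in> borel_measurable (PiM (K i) (\<lambda>_. borel))"
    proof (intro borel_measurable_sum borel_measurable_times)
      fix j assume "j \<in> {..<N}"
      then show "(\<lambda>f. f (i, j)) \<in> borel_measurable (PiM (K i) (\<lambda>_. borel))"
        by (intro measurable_component_singleton) (auto simp: K_def)
    qed simp
    then show ?thesis unfolding Y_def using F by (rule measurable_compose)
  qed
  have "indep_vars (\<lambda>_. borel) (\<lambda>i \<omega>. Y i (restrict (\<lambda>p. A \<omega> (fst p) (snd p)) (K i) )) t"
    by (rule indep_vars_compose2[OF ir Ym])
  moreover have "Y i (restrict (\<lambda>p. A \<omega> (fst p) (snd p)) (K i)) = F (lin (A \<omega>) N i u)" for i \<omega>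
    unfolding Y_def lin_def K_def by (simp add: mult.commute)
  ultimately show ?thesis by simp
qed

lemma tail_unit:
  assumes t: "t \<subseteq> {..<m}" "t \<noteq> {}" and u: "sqn N u = 1" and eta: "0 < \<eta>" "\<eta> \<le> 1"
  shows "prob {\<omega>\<in>space M. \<eta> < \<bar>Qf (A \<omega>) t N u\<bar>} \<le> 2 * exp (- (\<eta>\<^sup>2 * real (card t) / (16 * aconst\<^sup>2)))"
proof -
  have fin: "finite t" using t by (meson finite_lessThan finite_subset)
  define n where "n = real (card t)"
  have n: "n > 0" using fin t by (simp add: n_def card_gt_0_iff)
  define a where "a = aconst"
  have a: "a \<ge> 1" using aconst_pos by (simp add: a_def)
  define lam where "lam = \<eta> / (8 * a\<^sup>2)"
  have lam: "0 < lam" "lam * aconst \<le> 1/2"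
  proof -
    show "0 < lam" using eta a by (simp add: lam_def)
    have "a\<^sup>2 \<ge> a" using a by (simp add: power2_eq_square)
    then have "8 * a\<^sup>2 \<ge> 2 * a" using a by linarith
    then have "\<eta> / (8 * a\<^sup>2) * a \<le> 1 / (2 * a) * a"
      using eta a by (intro mult_right_mono frac_le) auto
    then show "lam * aconst \<le> 1/2" using a by (simp add: lam_def a_def)
  qed
  have lam_half: "lam \<le> 1/2"
  proof -
    have "lam * 1 \<le> lam * aconst" using lam(1) aconst_pos by (intro mult_left_mono) auto
    then show ?thesis using lam(2) by simp
  qed
  have nnq: "0 \<le> 4 * a\<^sup>2 * lam\<^sup>2" by simp
  define S where "S = (\<lambda>\<omega>. \<Sum>i\<in>t. (lin (A \<omega>) N i u)\<^sup>2)"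
  have Sm[measurable]: "S \<in> borel_measurable M"
    unfolding S_def by (intro borel_measurable_sum borel_measurable_power rv_lin) (use t in auto)
  have expo: "-lam * (n * (1 + \<eta>)) + n * (lam + 4 * a\<^sup>2 * lam\<^sup>2) = - (\<eta>\<^sup>2 * n / (16 * a\<^sup>2))"
    using a by (simp add: lam_def field_simps power2_eq_square)
  have expo2: "lam * (n * (1 - \<eta>)) + n * (- lam + 4 * a\<^sup>2 * lam\<^sup>2) = - (\<eta>\<^sup>2 * n / (16 * a\<^sup>2))"
    using a by (simp add: lam_def field_simps power2_eq_square)
  have up: "prob {\<omega>\<in>space M. S \<omega> \<ge> n * (1 + \<eta>)} \<le> exp (- (\<eta>\<^sup>2 * n / (16 * a\<^sup>2)))"
  proof -
    have ch: "emeasure M {\<omega>\<in>space M. S \<omega> \<ge> n * (1 + \<eta>)}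
        \<le> ennreal (exp (-lam * (n * (1 + \<eta>)))) * (\<integral>\<^sup>+\<omega>. ennreal (exp (lam * S \<omega>)) * indicator (space M) \<omega> \<partial>M)"
      by (rule Chernoff_ineq_nn_integral_ge) (use lam in auto)
    have "(\<integral>\<^sup>+\<omega>. ennreal (exp (lam * S \<omega>)) * indicator (space M) \<omega> \<partial>M)
        = (\<integral>\<^sup>+\<omega>. (\<Prod>i\<in>t. ennreal (exp (lam * (lin (A \<omega>) N i u)\<^sup>2))) \<partial>M)"
      by (intro nn_integral_cong) (simp add: S_def sum_distrib_left exp_sum[OF fin] prod_ennreal)
    also have "\<dots> = (\<Prod>i\<in>t. \<integral>\<^sup>+\<omega>. ennreal (exp (lam * (lin (A \<omega>) N i u)\<^sup>2)) \<partial>M)"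
      by (intro indep_vars_nn_integral fin row_indep[OF t(1), of "\<lambda>y. ennreal (exp (lam * y\<^sup>2))", simplified]) auto
    also have "\<dots> \<le> (\<Prod>i\<in>t. ennreal (1 + lam + 4 * aconst\<^sup>2 * lam\<^sup>2))"
      by (intro prod_mono_ennreal mgf_sq u lam less_imp_le) (use t in auto)
    also have "\<dots> = ennreal ((1 + lam + 4 * a\<^sup>2 * lam\<^sup>2) ^ card t)"
    proof -
      have "0 \<le> 1 + lam + 4 * a\<^sup>2 * lam\<^sup>2" using lam by (auto intro: add_nonneg_nonneg)
      then show ?thesis by (simp add: a_def ennreal_power del: ennreal_plus)
    qed
    also have "\<dots> \<le> ennreal (exp (n * (lam + 4 * a\<^sup>2 * lam\<^sup>2)))"
    proof (intro ennreal_leI)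
      have "(1 + lam + 4 * a\<^sup>2 * lam\<^sup>2) ^ card t \<le> (exp (lam + 4 * a\<^sup>2 * lam\<^sup>2)) ^ card t"
        using lam by (intro power_mono) (auto simp: add.assoc intro: add_nonneg_nonneg)
      also have "\<dots> = exp (n * (lam + 4 * a\<^sup>2 * lam\<^sup>2))" by (simp add: n_def exp_of_nat_mult[symmetric])
      finally show "(1 + lam + 4 * a\<^sup>2 * lam\<^sup>2) ^ card t \<le> exp (n * (lam + 4 * a\<^sup>2 * lam\<^sup>2))" .
    qed
    finally have "(\<integral>\<^sup>+\<omega>. ennreal (exp (lam * S \<omega>)) * indicator (space M) \<omega> \<partial>M) \<le> ennreal (exp (n * (lam + 4 * a\<^sup>2 * lam\<^sup>2)))" .
    then have "emeasure M {\<omega>\<in>space M. S \<omega> \<ge> n * (1 + \<eta>)} \<le> ennreal (exp (-lam * (n * (1 + \<eta>)))) * ennreal (exp (n * (lam + 4 * a\<^sup>2 * lam\<^sup>2)))"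
      by (rule order.trans[OF ch mult_left_mono]) simp
    also have "\<dots> = ennreal (exp (-lam * (n * (1 + \<eta>))) * exp (n * (lam + 4 * a\<^sup>2 * lam\<^sup>2)))"
      by (simp add: ennreal_mult)
    also have "exp (-lam * (n * (1 + \<eta>))) * exp (n * (lam + 4 * a\<^sup>2 * lam\<^sup>2)) = exp (- (\<eta>\<^sup>2 * n / (16 * a\<^sup>2)))"
      by (simp only: exp_add[symmetric] expo)
    finally show ?thesis by (simp add: emeasure_eq_measure)
  qed
  have lo: "prob {\<omega>\<in>space M. S \<omega> \<le> n * (1 - \<eta>)} \<le> exp (- (\<eta>\<^sup>2 * n / (16 * a\<^sup>2)))"
  proof -
    have ch: "emeasure M {\<omega>\<in>space M. S \<omega> \<le> n * (1 - \<eta>)}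
        \<le> ennreal (exp (lam * (n * (1 - \<eta>)))) * (\<integral>\<^sup>+\<omega>. ennreal (exp (-lam * S \<omega>)) * indicator (space M) \<omega> \<partial>M)"
      by (rule Chernoff_ineq_nn_integral_le) (use lam in auto)
    have "(\<integral>\<^sup>+\<omega>. ennreal (exp (-lam * S \<omega>)) * indicator (space M) \<omega> \<partial>M)
        = (\<integral>\<^sup>+\<omega>. (\<Prod>i\<in>t. ennreal (exp (-lam * (lin (A \<omega>) N i u)\<^sup>2))) \<partial>M)"
      by (intro nn_integral_cong) (simp add: S_def sum_distrib_left exp_sum[OF fin] prod_ennreal)
    also have "\<dots> = (\<Prod>i\<in>t. \<integral>\<^sup>+\<omega>. ennreal (exp (-lam * (lin (A \<omega>) N i u)\<^sup>2)) \<partial>M)"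
    proof -
      have ind2: "indep_vars (\<lambda>_. borel) (\<lambda>i \<omega>. ennreal (exp (-lam * (lin (A \<omega>) N i u)\<^sup>2))) t"
        by (rule row_indep[OF t(1), where F="\<lambda>y. ennreal (exp (-lam * y\<^sup>2))"]) measurable
      show ?thesis by (intro indep_vars_nn_integral fin ind2) auto
    qed
    also have "\<dots> \<le> (\<Prod>i\<in>t. ennreal (1 - lam + 4 * aconst\<^sup>2 * lam\<^sup>2))"
      by (intro prod_mono_ennreal mgf_negsq u lam less_imp_le) (use t in auto)
    also have "\<dots> = ennreal ((1 - lam + 4 * a\<^sup>2 * lam\<^sup>2) ^ card t)"
    proof -
      have "0 \<le> 1 - lam + 4 * a\<^sup>2 * lam\<^sup>2"
        using lam_half nnq by linarith
      then show ?thesis by (simp add: a_def ennreal_power del: ennreal_plus)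
    qed
    also have "\<dots> \<le> ennreal (exp (n * (- lam + 4 * a\<^sup>2 * lam\<^sup>2)))"
    proof (intro ennreal_leI)
      have nn: "0 \<le> 1 - lam + 4 * a\<^sup>2 * lam\<^sup>2"
        using lam_half nnq by linarith
      have "(1 - lam + 4 * a\<^sup>2 * lam\<^sup>2) ^ card t \<le> (exp (- lam + 4 * a\<^sup>2 * lam\<^sup>2)) ^ card t"
      proof (rule power_mono[OF _ nn])
        show "1 - lam + 4 * a\<^sup>2 * lam\<^sup>2 \<le> exp (- lam + 4 * a\<^sup>2 * lam\<^sup>2)"
          using exp_ge_add_one_self[of "- lam + 4 * a\<^sup>2 * lam\<^sup>2"] by linarith
      qed
      also have "\<dots> = exp (n * (- lam + 4 * a\<^sup>2 * lam\<^sup>2))" by (simp add: n_def exp_of_nat_mult[symmetric])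
      finally show "(1 - lam + 4 * a\<^sup>2 * lam\<^sup>2) ^ card t \<le> exp (n * (- lam + 4 * a\<^sup>2 * lam\<^sup>2))" .
    qed
    finally have "(\<integral>\<^sup>+\<omega>. ennreal (exp (-lam * S \<omega>)) * indicator (space M) \<omega> \<partial>M) \<le> ennreal (exp (n * (- lam + 4 * a\<^sup>2 * lam\<^sup>2)))" .
    then have "emeasure M {\<omega>\<in>space M. S \<omega> \<le> n * (1 - \<eta>)} \<le> ennreal (exp (lam * (n * (1 - \<eta>)))) * ennreal (exp (n * (- lam + 4 * a\<^sup>2 * lam\<^sup>2)))"
      by (rule order.trans[OF ch mult_left_mono]) simp
    also have "\<dots> = ennreal (exp (lam * (n * (1 - \<eta>))) * exp (n * (- lam + 4 * a\<^sup>2 * lam\<^sup>2)))"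
      by (simp add: ennreal_mult)
    also have "exp (lam * (n * (1 - \<eta>))) * exp (n * (- lam + 4 * a\<^sup>2 * lam\<^sup>2)) = exp (- (\<eta>\<^sup>2 * n / (16 * a\<^sup>2)))"
      by (simp only: exp_add[symmetric] expo2)
    finally show ?thesis by (simp add: emeasure_eq_measure)
  qed
  have sub: "{\<omega>\<in>space M. \<eta> < \<bar>Qf (A \<omega>) t N u\<bar>} \<subseteq> {\<omega>\<in>space M. S \<omega> \<ge> n * (1 + \<eta>)} \<union> {\<omega>\<in>space M. S \<omega> \<le> n * (1 - \<eta>)}"
  proof
    fix \<omega> assume "\<omega> \<in> {\<omega>\<in>space M. \<eta> < \<bar>Qf (A \<omega>) t N u\<bar>}"
    then have w: "\<omega> \<in> space M" "\<eta> < \<bar>S \<omega> / n - 1\<bar>" unfolding Qf_def S_def n_def using u by auto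
    then have "S \<omega> / n \<ge> 1 + \<eta> \<or> S \<omega> / n \<le> 1 - \<eta>" by linarith
    then have "S \<omega> \<ge> n * (1 + \<eta>) \<or> S \<omega> \<le> n * (1 - \<eta>)" using n by (auto simp: field_simps)
    then show "\<omega> \<in> {\<omega>\<in>space M. S \<omega> \<ge> n * (1 + \<eta>)} \<union> {\<omega>\<in>space M. S \<omega> \<le> n * (1 - \<eta>)}" using w by auto
  qed
  have "prob {\<omega>\<in>space M. \<eta> < \<bar>Qf (A \<omega>) t N u\<bar>} \<le> prob ({\<omega>\<in>space M. S \<omega> \<ge> n * (1 + \<eta>)} \<union> {\<omega>\<in>space M. S \<omega> \<le> n * (1 - \<eta>)})"
    by (rule finite_measure_mono[OF sub]) measurable
  also have "\<dots> \<le> prob {\<omega>\<in>space M. S \<omega> \<ge> n * (1 + \<eta>)} + prob {\<omega>\<in>space M. S \<omega> \<le> n * (1 - \<eta>)}"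
    by (rule measure_Un_le) measurable
  also have "\<dots> \<le> 2 * exp (- (\<eta>\<^sup>2 * n / (16 * a\<^sup>2)))" using up lo by simp
  finally show ?thesis by (simp add: n_def a_def)
qed

end

lemma ric_cong:
  assumes "\<And>i j. i \<in> I \<Longrightarrow> j < N \<Longrightarrow> B i j = B' i j"
  shows "ric B I N s = ric B' I N s"
proof -
  have "sq_norm_image B I N z = sq_norm_image B' I N z" for z
    unfolding sq_norm_image_def using assms by (intro sum.cong refl arg_cong[where f="\<lambda>x. x\<^sup>2"]) auto
  then show ?thesis unfolding ric_def by simp
qed

lemma sqi_Qf:
  assumes "card t > 0"
  shows "sq_norm_image (\<lambda>i j. a i j / sqrt (real (card t))) t N z = (\<Sum>i\<in>t. (lin a N i z)\<^sup>2) / real (card t)"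
proof -
  have "(\<Sum>j<N. a i j / sqrt (real (card t)) * z j)\<^sup>2 = (lin a N i z)\<^sup>2 / real (card t)" for i
  proof -
    have "(\<Sum>j<N. a i j / sqrt (real (card t)) * z j) = lin a N i z / sqrt (real (card t))"
      unfolding lin_def by (simp add: sum_divide_distrib)
    then show ?thesis using assms by (simp add: power_divide)
  qed
  then show ?thesis unfolding sq_norm_image_def by (simp add: sum_divide_distrib)
qed

lemma good_det:
  assumes t: "card t > 0" and s: "0 < s" "s \<le> N" and eta: "0 \<le> \<eta>"
  and net: "\<And>S k. S \<subseteq> {..<N} \<Longrightarrow> card S = s \<Longrightarrow> k \<in> Net S s \<Longrightarrow>
              \<bar>Qf a t N (nvec S s k)\<bar> \<le> \<eta> * sqn N (nvec S s k)"
  shows "ric (\<lambda>i j. a i j / sqrt (real (card t))) t N s \<le> 3 * \<eta>"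
proof (rule ric_le)
  show "N > 0" "s > 0" using s by auto
  fix z assume z: "sparse_unit N s z"
  define A0 where "A0 = {j\<in>{..<N}. z j \<noteq> 0}"
  have "card A0 \<le> s" using z unfolding sparse_unit_def A0_def by simp
  moreover have "s \<le> card {..<N}" using s by simp
  moreover have "A0 \<subseteq> {..<N}" unfolding A0_def by auto
  ultimately obtain S where S: "A0 \<subseteq> S" "S \<subseteq> {..<N}" "card S = s"
    using exists_subset_between[of A0 s "{..<N}"] by auto
  have zS: "z j = 0" if "j \<notin> S" for j
  proof (cases "j < N")
    case True then show ?thesis using that S(1) unfolding A0_def by auto
  next
    case False then show ?thesis using z unfolding sparse_unit_def by auto
  qed
  have z1: "sqn N z = 1" using z unfolding sparse_unit_def sqn_def by auto
  have "\<bar>Qf a t N z\<bar> \<le> 3 * \<eta>"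
    by (rule net_det[OF S(2,3) s(1) eta net[OF S(2,3)] zS z1])
  moreover have "sq_norm_image (\<lambda>i j. a i j / sqrt (real (card t))) t N z - 1 = Qf a t N z"
    unfolding sqi_Qf[OF t] Qf_def z1 ..
  ultimately show "\<bar>sq_norm_image (\<lambda>i j. a i j / sqrt (real (card t))) t N z - 1\<bar> \<le> 3 * \<eta>" by simp
qed

lemma card_Net:
  assumes "S \<subseteq> {..<N}" "card S = s"
  shows "finite (Net S s)" "real (card (Net S s)) \<le> exp (201 * real s) * 4 ^ s"
proof -
  have finS: "finite S" using assms by (meson finite_lessThan finite_subset)
  have "Net S s \<subseteq> PiE S (\<lambda>_. {- int (11 * s) .. int (11 * s)})" unfolding Net_def by auto
  then show "finite (Net S s)" using finS by (meson finite_PiE finite_atLeastAtMost_int finite_subset)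
  show "real (card (Net S s)) \<le> exp (201 * real s) * 4 ^ s"
    using lattice_count[OF finS, of "int (11 * s)" "201 * real s"] assms unfolding Net_def by simp
qed

lemma sq_norm_image_PiM_meas:
  assumes "t \<times> {..<N} \<subseteq> I0"
  shows "(\<lambda>f. sq_norm_image (\<lambda>i j. f (i, j) / d) t N v) \<in> borel_measurable (PiM I0 (\<lambda>_. borel))"
  unfolding sq_norm_image_def
proof (intro borel_measurable_sum borel_measurable_power borel_measurable_times borel_measurable_divide)
  fix i j assume "i \<in> t" "j \<in> {..<N}"
  then show "(\<lambda>f. f (i, j)) \<in> borel_measurable (PiM I0 (\<lambda>_. borel))"
    using assms by (intro measurable_component_singleton) auto
qed auto

lemma ric_event_PiM:
  assumes "t \<times> {..<N} \<subseteq> I0" "0 < N" "0 < s"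
  shows "{f \<in> space (PiM I0 (\<lambda>_. borel)). ric (\<lambda>i j. f (i, j) / d) t N s < \<delta>} \<in> sets (PiM I0 (\<lambda>_. borel))"
proof -
  let ?P = "PiM I0 (\<lambda>_. borel) :: (nat \<times> nat \<Rightarrow> real) measure"
  define cnd where "cnd = (\<lambda>l. card {j\<in>{..<N}. rv N l j \<noteq> 0} \<le> s)"
  define g where "g = (\<lambda>l f. sq_norm_image (\<lambda>i j. f (i, j) / d) t N (rv N l))"
  define P where "P = (\<lambda>r l. {f \<in> space ?P. of_rat r < \<delta> \<and> (cnd l \<longrightarrow>
      ((1 - of_rat r) * sqn N (rv N l) \<le> g l f \<and> g l f \<le> (1 + of_rat r) * sqn N (rv N l)))})"
  have gm: "g l \<in> borel_measurable ?P" for l unfolding g_def by (rule sq_norm_image_PiM_meas[OF assms(1)])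
  have Pm: "P r l \<in> sets ?P" for r l
  proof (cases "of_rat r < \<delta> \<and> cnd l")
    case True
    then have "P r l = {f \<in> space ?P. (1 - of_rat r) * sqn N (rv N l) \<le> g l f} \<inter> {f \<in> space ?P. g l f \<le> (1 + of_rat r) * sqn N (rv N l)}"
      unfolding P_def by auto
    also have "\<dots> \<in> sets ?P"
      by (intro sets.Int borel_measurable_le gm borel_measurable_const)
    finally show ?thesis .
  next
    case False
    then consider "\<not> of_rat r < \<delta>" | "of_rat r < \<delta>" "\<not> cnd l" by blast
    then show ?thesis
    proof cases
      case 1 then have "P r l = {}" unfolding P_def by auto
      then show ?thesis by simp
    next
      case 2 then have "P r l = space ?P" unfolding P_def by auto
      then show ?thesis by simp
    qed
  qed
  have "{f \<in> space ?P. ric (\<lambda>i j. f (i, j) / d) t N s < \<delta>} = (\<Union>r\<in>UNIV. \<Inter>l\<in>UNIV. P r l)"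
    using ric_lt_iff[OF assms(2,3)] unfolding P_def ratcond_def cnd_def g_def by auto
  also have "\<dots> \<in> sets ?P"
    by (intro sets.countable_UN sets.countable_INT) (auto intro: Pm)
  finally show ?thesis .
qed

lemma num_bound:
  fixes a \<delta> n :: real
  assumes a: "a \<ge> 1" and s: "0 < s" "s \<le> N" and d: "\<delta> > 0" and n: "n \<ge> 0"
  and lt: "2 * (exp 1 * real N / real s) ^ s * exp (7 * real s / 2) * exp (- (1 / (20000 * a\<^sup>2)) * \<delta>\<^sup>2 * n) < 1"
  shows "real (N choose s) * (exp (201 * real s) * 4 ^ s) * (2 * exp (- ((\<delta>/4)\<^sup>2 * n / (16 * a\<^sup>2))))
    \<le> 2 * (exp 1 * real N / real s) ^ s * exp (7 * real s / 2) * exp (- (1 / (20000 * a\<^sup>2)) * \<delta>\<^sup>2 * n)"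
proof -
  define B where "B = (exp 1 * real N / real s) ^ s"
  define Cc where "Cc = 1 / (20000 * a\<^sup>2)"
  have a2: "a\<^sup>2 \<ge> 1" using a by (simp add: one_le_power)
  have B1: "B \<ge> 1"
  proof -
    have "exp 1 * real N / real s \<ge> 1"
    proof -
      have "real N / real s \<ge> 1" using s by simp
      moreover have "exp (1::real) \<ge> 1" by simp
      ultimately have "exp 1 * (real N / real s) \<ge> 1 * 1" by (intro mult_mono) auto
      then show ?thesis by simp
    qed
    then show ?thesis unfolding B_def by (simp add: one_le_power)
  qed
  have binom: "real (N choose s) \<le> B" unfolding B_def by (rule binom_bound[OF s])
  have four: "(4::real) ^ s \<le> exp (2 * real s)"
  proof -
    have e2: "exp (1::real) \<ge> 2" using exp_ge_add_one_self[of 1] by simp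
    have "(2::real) * 2 \<le> exp 1 * exp 1" by (rule mult_mono[OF e2 e2]) auto
    then have "(4::real) \<le> exp 2" by (simp add: exp_add[symmetric])
    then have "(4::real) ^ s \<le> exp 2 ^ s" by (intro power_mono) auto
    also have "\<dots> = exp (2 * real s)" by (simp add: exp_of_nat_mult[symmetric] mult.commute)
    finally show ?thesis .
  qed
  have h: "2 * B * exp (7 * real s / 2) * exp (- Cc * \<delta>\<^sup>2 * n) < 1" using lt unfolding B_def Cc_def .
  have ex: "exp (7 * real s / 2 - Cc * \<delta>\<^sup>2 * n) = exp (7 * real s / 2) * exp (- Cc * \<delta>\<^sup>2 * n)"
    using exp_add[of "7 * real s / 2" "- Cc * \<delta>\<^sup>2 * n"] by simp
  define X where "X = exp (7 * real s / 2) * exp (- Cc * \<delta>\<^sup>2 * n)"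
  have "1 * X \<le> (2 * B) * X"
    by (rule mult_right_mono) (use B1 in \<open>auto simp: X_def\<close>)
  moreover have "(2 * B) * X < 1" using h unfolding X_def by (simp only: mult.assoc)
  ultimately have "X < 1" by linarith
  then have "exp (7 * real s / 2 - Cc * \<delta>\<^sup>2 * n) < 1" using ex unfolding X_def by simp
  then have ss: "7 * real s / 2 < Cc * \<delta>\<^sup>2 * n" by simp
  have key: "203 * real s - (\<delta>/4)\<^sup>2 * n / (16 * a\<^sup>2) \<le> 7 * real s / 2 - Cc * \<delta>\<^sup>2 * n"
  proof -
    have "(\<delta>/4)\<^sup>2 * n / (16 * a\<^sup>2) = (625/8) * (Cc * \<delta>\<^sup>2 * n)"
      unfolding Cc_def using a2 by (simp add: field_simps power2_eq_square)
    moreover have "0 \<le> Cc * \<delta>\<^sup>2 * n" unfolding Cc_def using n by simp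
    ultimately show ?thesis using ss by linarith
  qed
  have "real (N choose s) * (exp (201 * real s) * 4 ^ s) * (2 * exp (- ((\<delta>/4)\<^sup>2 * n / (16 * a\<^sup>2))))
      \<le> B * (exp (201 * real s) * exp (2 * real s)) * (2 * exp (- ((\<delta>/4)\<^sup>2 * n / (16 * a\<^sup>2))))"
    using binom four by (intro mult_right_mono mult_mono mult_left_mono) auto
  also have "\<dots> = 2 * B * exp (203 * real s - (\<delta>/4)\<^sup>2 * n / (16 * a\<^sup>2))"
  proof -
    have "exp (201 * real s) * exp (2 * real s) = exp (203 * real s)"
      using exp_add[of "201 * real s" "2 * real s"] by simp
    moreover have "exp (203 * real s - (\<delta>/4)\<^sup>2 * n / (16 * a\<^sup>2)) = exp (203 * real s) * exp (- ((\<delta>/4)\<^sup>2 * n / (16 * a\<^sup>2)))"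
      using exp_add[of "203 * real s" "- ((\<delta>/4)\<^sup>2 * n / (16 * a\<^sup>2))"] by simp
    ultimately show ?thesis by (simp only: mult_ac)
  qed
  also have "\<dots> \<le> 2 * B * exp (7 * real s / 2 - Cc * \<delta>\<^sup>2 * n)"
    using B1 key by (intro mult_left_mono) auto
  also have "\<dots> = 2 * B * exp (7 * real s / 2) * exp (- Cc * \<delta>\<^sup>2 * n)"
    using ex by (simp only: mult.assoc)
  finally show ?thesis unfolding B_def Cc_def by simp
qed

context subg
begin

lemma rv_Qf[measurable]: "t \<subseteq> {..<m} \<Longrightarrow> (\<lambda>\<omega>. Qf (A \<omega>) t N x) \<in> borel_measurable M"
  unfolding Qf_def
  by (intro borel_measurable_diff borel_measurable_divide borel_measurable_sum borel_measurable_power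
      rv_lin borel_measurable_const) auto

lemma ev_bound:
  assumes t: "t \<subseteq> {..<m}" "t \<noteq> {}" and eta: "0 < \<eta>" "\<eta> \<le> 1"
  shows "prob {\<omega>\<in>space M. \<eta> * sqn N x < \<bar>Qf (A \<omega>) t N x\<bar>} \<le> 2 * exp (- (\<eta>\<^sup>2 * real (card t) / (16 * aconst\<^sup>2)))"
proof (cases "sqn N x = 0")
  case True
  then have "\<forall>j\<in>{..<N}. (x j)\<^sup>2 = 0" unfolding sqn_def by (subst (asm) sum_nonneg_eq_0_iff) auto
  then have "Qf (A \<omega>) t N x = 0" for \<omega> by (intro Qf_zero) auto
  then have e: "{\<omega>\<in>space M. \<eta> * sqn N x < \<bar>Qf (A \<omega>) t N x\<bar>} = {}" using True by auto
  show ?thesis by (subst e) simp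
next
  case False
  define \<sigma> where "\<sigma> = sqn N x"
  have sp: "\<sigma> > 0" using False sqn_nonneg[of N x] unfolding \<sigma>_def by linarith
  define u where "u = (\<lambda>j. (1 / sqrt \<sigma>) * x j)"
  have u1: "sqn N u = 1" unfolding u_def sqn_scale using sp by (simp add: \<sigma>_def power_divide)
  have "x = (\<lambda>j. sqrt \<sigma> * u j)" unfolding u_def using sp by auto
  then have q: "Qf (A \<omega>) t N x = \<sigma> * Qf (A \<omega>) t N u" for \<omega> using sp by (simp add: Qf_scale)
  have "{\<omega>\<in>space M. \<eta> * sqn N x < \<bar>Qf (A \<omega>) t N x\<bar>} = {\<omega>\<in>space M. \<eta> < \<bar>Qf (A \<omega>) t N u\<bar>}"
    using sp by (auto simp: q abs_mult \<sigma>_def[symmetric] mult.commute[of \<eta>])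
  then show ?thesis using tail_unit[OF t u1 eta] by simp
qed

lemma FA_meas:
  "(\<lambda>\<omega>. restrict (\<lambda>(i,j). A \<omega> i j) ({..<m} \<times> {..<N})) \<in> measurable M (PiM ({..<m} \<times> {..<N}) (\<lambda>_. borel))"
  by (rule measurable_restrict) (auto simp: split_beta)

lemma G_eq:
  assumes t: "t \<subseteq> {..<m}"
  shows "{\<omega>\<in>space M. ric (\<lambda>i j. A \<omega> i j / sqrt (real (card t))) t N s < \<delta>}
    = (\<lambda>\<omega>. restrict (\<lambda>(i,j). A \<omega> i j) ({..<m} \<times> {..<N})) -`
        {f \<in> space (PiM ({..<m} \<times> {..<N}) (\<lambda>_. borel)). ric (\<lambda>i j. f (i, j) / sqrt (real (card t))) t N s < \<delta>}
      \<inter> space M"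
proof -
  have r: "ric (\<lambda>i j. restrict (\<lambda>(i,j). A \<omega> i j) ({..<m} \<times> {..<N}) (i, j) / sqrt (real (card t))) t N s
        = ric (\<lambda>i j. A \<omega> i j / sqrt (real (card t))) t N s" for \<omega>
    by (rule ric_cong) (use t in auto)
  show ?thesis using measurable_space[OF FA_meas] r by auto
qed

lemma G_sets:
  assumes t: "t \<subseteq> {..<m}" and N: "0 < N" and s: "0 < s"
  shows "{\<omega>\<in>space M. ric (\<lambda>i j. A \<omega> i j / sqrt (real (card t))) t N s < \<delta>} \<in> sets M"
  unfolding G_eq[OF t]
  by (rule measurable_sets[OF FA_meas ric_event_PiM]) (use t N s in auto)

lemma prob_G:
  assumes t: "t \<subseteq> {..<m}" and s: "0 < s" "s \<le> N" and d: "0 < \<delta>" "\<delta> < 1"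
  shows "prob {\<omega>\<in>space M. ric (\<lambda>i j. A \<omega> i j / sqrt (real (card t))) t N s < \<delta>}
    \<ge> 1 - 2 * (exp 1 * real N / real s) ^ s * exp (7 * real s / 2) * exp (- (1 / (20000 * aconst\<^sup>2)) * \<delta>\<^sup>2 * real (card t))"
    (is "prob ?G \<ge> 1 - ?K")
proof (cases "?K < 1")
  case False
  then show ?thesis using measure_nonneg[of M ?G] by linarith
next
  case True
  have Bge: "(exp 1 * real N / real s) ^ s \<ge> 1"
  proof -
    have "real N / real s \<ge> 1" using s by simp
    moreover have "exp (1::real) \<ge> 1" by simp
    ultimately have "exp 1 * (real N / real s) \<ge> 1 * 1" by (intro mult_mono) auto
    then show ?thesis by (simp add: one_le_power)
  qed
  have tne: "t \<noteq> {}"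
  proof
    assume "t = {}"
    then have "2 * ((exp 1 * real N / real s) ^ s * exp (7 * real s / 2)) < 1" using True by (simp add: mult.assoc)
    moreover have "exp (7 * real s / 2) \<ge> 1" using s by simp
    moreover have "1 * 1 \<le> (exp 1 * real N / real s) ^ s * exp (7 * real s / 2)"
      using Bge \<open>exp (7 * real s / 2) \<ge> 1\<close> by (intro mult_mono) auto
    ultimately show False by linarith
  qed
  define \<eta> where "\<eta> = \<delta> / 4"
  have eta: "0 < \<eta>" "\<eta> \<le> 1" using d by (auto simp: \<eta>_def)
  define Ss where "Ss = {S. S \<subseteq> {..<N} \<and> card S = s}"
  define Ev where "Ev = (\<lambda>S k. {\<omega>\<in>space M. \<eta> * sqn N (nvec S s k) < \<bar>Qf (A \<omega>) t N (nvec S s k)\<bar>})"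
  define Fail where "Fail = (\<Union>S\<in>Ss. \<Union>k\<in>Net S s. Ev S k)"
  define Bd where "Bd = 2 * exp (- (\<eta>\<^sup>2 * real (card t) / (16 * aconst\<^sup>2)))"
  have finSs: "finite Ss" unfolding Ss_def by (rule finite_subset[of _ "Pow {..<N}"]) auto
  have cardSs: "card Ss = N choose s" unfolding Ss_def using n_subsets[of "{..<N}" s] by simp
  have Evm: "Ev S k \<in> sets M" for S k
    unfolding Ev_def by (intro borel_measurable_less borel_measurable_const borel_measurable_abs rv_Qf t)
  have inner: "prob (\<Union>k\<in>Net S s. Ev S k) \<le> exp (201 * real s) * 4 ^ s * Bd" if S: "S \<in> Ss" for S
  proof -
    have SS: "S \<subseteq> {..<N}" "card S = s" using S unfolding Ss_def by auto
    have "prob (\<Union>k\<in>Net S s. Ev S k) \<le> (\<Sum>k\<in>Net S s. prob (Ev S k))"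
      by (rule measure_UNION_le[OF card_Net(1)[OF SS] Evm])
    also have "\<dots> \<le> (\<Sum>k\<in>Net S s. Bd)"
      by (intro sum_mono) (unfold Ev_def Bd_def, rule ev_bound[OF t tne eta])
    also have "\<dots> = real (card (Net S s)) * Bd" by simp
    also have "\<dots> \<le> exp (201 * real s) * 4 ^ s * Bd"
      by (rule mult_right_mono[OF card_Net(2)[OF SS]]) (simp add: Bd_def)
    finally show ?thesis .
  qed
  have "prob Fail \<le> (\<Sum>S\<in>Ss. prob (\<Union>k\<in>Net S s. Ev S k))"
    unfolding Fail_def
    by (rule measure_UNION_le[OF finSs]) (auto intro!: sets.finite_UN card_Net(1) Evm simp: Ss_def)
  also have "\<dots> \<le> (\<Sum>S\<in>Ss. exp (201 * real s) * 4 ^ s * Bd)" by (intro sum_mono inner)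
  also have "\<dots> = real (N choose s) * (exp (201 * real s) * 4 ^ s) * Bd" using cardSs by simp
  also have "\<dots> \<le> ?K"
    unfolding Bd_def \<eta>_def
    by (rule num_bound[OF aconst_pos s d(1)]) (use True in auto)
  finally have pF: "prob Fail \<le> ?K" .
  have Fm: "Fail \<in> sets M" unfolding Fail_def
    by (auto intro!: sets.finite_UN card_Net(1) Evm finSs simp: Ss_def)
  have sub: "space M - Fail \<subseteq> ?G"
  proof
    fix \<omega> assume w: "\<omega> \<in> space M - Fail"
    have "ric (\<lambda>i j. A \<omega> i j / sqrt (real (card t))) t N s \<le> 3 * \<eta>"
    proof (rule good_det)
      show "card t > 0" using tne t by (meson card_gt_0_iff finite_lessThan finite_subset)
      show "0 < s" "s \<le> N" using s by auto
      show "0 \<le> \<eta>" using eta by simp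
      fix S k assume "S \<subseteq> {..<N}" "card S = s" "k \<in> Net S s"
      then have "\<omega> \<notin> Ev S k" using w unfolding Fail_def Ss_def by auto
      then show "\<bar>Qf (A \<omega>) t N (nvec S s k)\<bar> \<le> \<eta> * sqn N (nvec S s k)" using w unfolding Ev_def by auto
    qed
    then show "\<omega> \<in> ?G" using w d unfolding \<eta>_def by auto
  qed
  have "1 - ?K \<le> 1 - prob Fail" using pF by simp
  also have "1 - prob Fail = prob (space M - Fail)" using prob_compl[OF Fm] by simp
  also have "\<dots> \<le> prob ?G" by (rule finite_measure_mono[OF sub G_sets[OF t _ s(1)]]) (use s in auto)
  finally show ?thesis .
qed

end

lemma power_sum_nat: "finite A \<Longrightarrow> (x::real) ^ (\<Sum>i\<in>A. f i) = (\<Prod>i\<in>A. x ^ f i)"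
  by (induction A rule: finite_induct) (auto simp: power_add)

definition Jset :: "nat \<Rightarrow> (nat \<Rightarrow> nat \<Rightarrow> bool) \<Rightarrow> nat \<Rightarrow> nat set" where
  "Jset K l r = {j. j < K \<and> (\<forall>k. j \<le> k \<and> k < K \<longrightarrow> l r k)}"

lemma received_UN: "received R K l = (\<Union>r\<in>{..<R}. (\<lambda>j. r * K + j) ` Jset K l r)"
  unfolding received_def Jset_def by auto

lemma card_received: "card (received R K l) = (\<Sum>r<R. card (Jset K l r))"
proof -
  have fin: "finite (Jset K l r)" for r unfolding Jset_def by auto
  have disj: "disjoint_family_on (\<lambda>r. (\<lambda>j. r * K + j) ` Jset K l r) {..<R}"
  proof (unfold disjoint_family_on_def, intro ballI impI)
    fix r r' assume "r \<in> {..<R}" "r' \<in> {..<R}" "r \<noteq> r'"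
    show "(\<lambda>j. r * K + j) ` Jset K l r \<inter> (\<lambda>j. r' * K + j) ` Jset K l r' = {}"
    proof (rule ccontr)
      assume "(\<lambda>j. r * K + j) ` Jset K l r \<inter> (\<lambda>j. r' * K + j) ` Jset K l r' \<noteq> {}"
      then obtain j j' where jj: "j < K" "j' < K" "r * K + j = r' * K + j'" unfolding Jset_def by auto
      have "r = r'"
      proof (rule ccontr)
        assume "r \<noteq> r'"
        then consider "Suc r \<le> r'" | "Suc r' \<le> r" by linarith
        then show False
        proof cases
          case 1
          then have "Suc r * K \<le> r' * K" by (rule mult_le_mono1)
          then show False using jj by simp
        next
          case 2
          then have "Suc r' * K \<le> r * K" by (rule mult_le_mono1)
          then show False using jj by simp
        qed
      qed
      then show False using \<open>r \<noteq> r'\<close> by simp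
    qed
  qed
  have "card (received R K l) = (\<Sum>r<R. card ((\<lambda>j. r * K + j) ` Jset K l r))"
    unfolding received_UN by (rule card_UN_disjoint') (use disj fin in auto)
  also have "\<dots> = (\<Sum>r<R. card (Jset K l r))"
    by (intro sum.cong refl card_image) (auto simp: inj_on_def)
  finally show ?thesis .
qed

lemma prod_of_bool: "finite S \<Longrightarrow> (\<Prod>k\<in>S. (of_bool (P k) :: real)) = of_bool (\<forall>k\<in>S. P k)"
  by (induction S rule: finite_induct) auto

lemma Jset_claim:
  assumes i: "1 \<le> i" "i \<le> K"
  shows "(\<forall>k\<in>{K-i..<K}. l r k) \<longleftrightarrow> i \<le> card (Jset K l r)"
proof
  assume h: "\<forall>k\<in>{K-i..<K}. l r k"
  have sub: "{K-i..<K} \<subseteq> Jset K l r" unfolding Jset_def using h by auto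
  have "card {K-i..<K} \<le> card (Jset K l r)" using card_mono[OF _ sub] by (auto simp: Jset_def)
  then show "i \<le> card (Jset K l r)" using i by simp
next
  assume c: "i \<le> card (Jset K l r)"
  show "\<forall>k\<in>{K-i..<K}. l r k"
  proof (rule ccontr)
    assume "\<not> (\<forall>k\<in>{K-i..<K}. l r k)"
    then obtain k0 where k0: "K - i \<le> k0" "k0 < K" "\<not> l r k0" by auto
    have "Jset K l r \<subseteq> {Suc k0..<K}"
    proof
      fix j assume j: "j \<in> Jset K l r"
      then have "j < K" "\<forall>k. j \<le> k \<and> k < K \<longrightarrow> l r k" unfolding Jset_def by auto
      then have "\<not> j \<le> k0" using k0 by auto
      then show "j \<in> {Suc k0..<K}" using \<open>j < K\<close> by auto
    qed
    then have "card (Jset K l r) \<le> card {Suc k0..<K}" by (rule card_mono[rotated]) simp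
    also have "\<dots> = K - Suc k0" by simp
    finally show False using c k0 i by linarith
  qed
qed

lemma W_pointwise:
  fixes q :: real
  shows "q ^ card (Jset K l r) = 1 - (1 - q) * (\<Sum>j<K. q ^ j * (\<Prod>k\<in>{K - Suc j..<K}. of_bool (l r k)))"
proof -
  define X where "X = card (Jset K l r)"
  have XK: "X \<le> K" unfolding X_def Jset_def by (rule order.trans[OF card_mono[of "{..<K}"]]) auto
  have "(\<Prod>k\<in>{K - Suc j..<K}. (of_bool (l r k) :: real)) = of_bool (j < X)" if "j < K" for j
    using Jset_claim[of "Suc j" K l r] that by (simp add: prod_of_bool X_def Suc_le_eq)
  then have "(\<Sum>j<K. q ^ j * (\<Prod>k\<in>{K - Suc j..<K}. of_bool (l r k))) = (\<Sum>j<K. q ^ j * of_bool (j < X))"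
    by (intro sum.cong) auto
  also have "\<dots> = (\<Sum>j\<in>{..<X}. q ^ j)"
    using XK by (subst sum.mono_neutral_cong_right[of "{..<K}" "{..<X}"]) auto
  finally have s: "(\<Sum>j<K. q ^ j * (\<Prod>k\<in>{K - Suc j..<K}. of_bool (l r k))) = (\<Sum>j<X. q ^ j)" .
  have "1 - (1 - q) * (\<Sum>j<X. q ^ j) = q ^ X"
    using power_diff_1_eq[of q X] by (simp add: algebra_simps)
  then show ?thesis unfolding s X_def by simp
qed

locale netw = prob_space +
  fixes L :: "'a \<Rightarrow> nat \<Rightarrow> nat \<Rightarrow> bool" and R K :: nat and p :: real
  assumes indepL: "indep_vars (\<lambda>_. count_space UNIV) (\<lambda>(r,k) \<omega>. L \<omega> r k) ({..<R} \<times> {..<K})"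
  and probL: "\<And>r k. r < R \<Longrightarrow> k < K \<Longrightarrow> prob {\<omega>\<in>space M. L \<omega> r k} = p"
begin

lemma indepL': "indep_vars (\<lambda>_. count_space UNIV) (\<lambda>x \<omega>. L \<omega> (fst x) (snd x)) ({..<R} \<times> {..<K})"
proof -
  have "(\<lambda>(r,k) \<omega>. L \<omega> r k) = (\<lambda>x \<omega>. L \<omega> (fst x) (snd x))" by (auto simp: fun_eq_iff split_beta)
  then show ?thesis using indepL by simp
qed

lemma rvL: "r < R \<Longrightarrow> k < K \<Longrightarrow> (\<lambda>\<omega>. L \<omega> r k) \<in> measurable M (count_space UNIV)"
  using indepL' unfolding indep_vars_def by force

lemma rv_ob: "r < R \<Longrightarrow> k < K \<Longrightarrow> (\<lambda>\<omega>. of_bool (L \<omega> r k) :: real) \<in> borel_measurable M"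
  by (rule measurable_compose[OF rvL]) auto

lemma E_prod:
  assumes r: "r < R" and S: "S \<subseteq> {..<K}"
  shows "integrable M (\<lambda>\<omega>. \<Prod>k\<in>S. (of_bool (L \<omega> r k) :: real))"
    and "(\<integral>\<omega>. (\<Prod>k\<in>S. (of_bool (L \<omega> r k) :: real)) \<partial>M) = p ^ card S"
proof -
  let ?I = "{r} \<times> S"
  have finS: "finite S" using S by (meson finite_lessThan finite_subset)
  have fin: "finite ?I" using finS by simp
  have ind: "indep_vars (\<lambda>_. borel) (\<lambda>x \<omega>. (of_bool (L \<omega> (fst x) (snd x)) :: real)) ?I"
    using indep_vars_compose2[OF indep_vars_subset[OF indepL', of ?I], of "\<lambda>_ b. of_bool b :: real" "\<lambda>_. borel"] r S
    by auto
  have ints: "integrable M (\<lambda>\<omega>. (of_bool (L \<omega> (fst x) (snd x)) :: real))" if "x \<in> ?I" for x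
  proof -
    have "(\<lambda>\<omega>. (of_bool (L \<omega> (fst x) (snd x)) :: real)) \<in> borel_measurable M"
      using that r S by (intro rv_ob) auto
    then show ?thesis by (intro integrable_const_bound[where B=1] AE_I2) auto
  qed
  have pe: "(\<Prod>x\<in>?I. f x) = (\<Prod>k\<in>S. f (r, k))" for f :: "nat \<times> nat \<Rightarrow> real"
  proof -
    have "?I = Pair r ` S" by auto
    then show ?thesis by (simp add: prod.reindex inj_on_def)
  qed
  have "integrable M (\<lambda>\<omega>. \<Prod>x\<in>?I. (of_bool (L \<omega> (fst x) (snd x)) :: real))"
    by (rule indep_vars_integrable[OF fin ind ints])
  then show "integrable M (\<lambda>\<omega>. \<Prod>k\<in>S. (of_bool (L \<omega> r k) :: real))" by (simp add: pe)
  have "(\<integral>\<omega>. (\<Prod>x\<in>?I. (of_bool (L \<omega> (fst x) (snd x)) :: real)) \<partial>M) = (\<Prod>x\<in>?I. \<integral>\<omega>. (of_bool (L \<omega> (fst x) (snd x)) :: real) \<partial>M)"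
    by (rule indep_vars_lebesgue_integral[OF fin ind ints])
  also have "\<dots> = (\<Prod>k\<in>S. \<integral>\<omega>. (of_bool (L \<omega> r k) :: real) \<partial>M)" by (simp add: pe)
  also have "\<dots> = (\<Prod>k\<in>S. p)"
  proof (intro prod.cong refl)
    fix k assume k: "k \<in> S"
    have kK: "k < K" using k S by auto
    have "(\<lambda>\<omega>. L \<omega> r k) -` {True} \<inter> space M \<in> sets M" by (rule measurable_sets[OF rvL[OF r kK]]) auto
    moreover have "{\<omega>\<in>space M. L \<omega> r k} = (\<lambda>\<omega>. L \<omega> r k) -` {True} \<inter> space M" by auto
    ultimately have sets: "{\<omega>\<in>space M. L \<omega> r k} \<in> sets M" by simp
    have "(\<integral>\<omega>. (of_bool (L \<omega> r k) :: real) \<partial>M) = (\<integral>\<omega>. indicator {\<omega>\<in>space M. L \<omega> r k} \<omega> \<partial>M)"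
      by (intro Bochner_Integration.integral_cong) (auto simp: indicator_def)
    also have "\<dots> = prob {\<omega>\<in>space M. L \<omega> r k}" using sets by simp
    also have "\<dots> = p" using probL r k S by auto
    finally show "(\<integral>\<omega>. (of_bool (L \<omega> r k) :: real) \<partial>M) = p" .
  qed
  also have "\<dots> = p ^ card S" by simp
  finally show "(\<integral>\<omega>. (\<Prod>k\<in>S. (of_bool (L \<omega> r k) :: real)) \<partial>M) = p ^ card S" by (simp add: pe)
qed

definition W :: "real \<Rightarrow> nat \<Rightarrow> 'a \<Rightarrow> real" where
  "W q r \<omega> = 1 - (1 - q) * (\<Sum>j<K. q ^ j * (\<Prod>k\<in>{K - Suc j..<K}. of_bool (L \<omega> r k)))"

lemma W_int:
  assumes r: "r < R"
  shows "integrable M (W q r)" and "(\<integral>\<omega>. W q r \<omega> \<partial>M) = 1 - (1 - q) * (\<Sum>j<K. q ^ j * p ^ Suc j)"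
proof -
  have sub: "{K - Suc j..<K} \<subseteq> {..<K}" for j by auto
  have ip: "integrable M (\<lambda>\<omega>. q ^ j * (\<Prod>k\<in>{K - Suc j..<K}. (of_bool (L \<omega> r k) :: real)))" for j
    using E_prod(1)[OF r sub[of j]] by simp
  have isum: "integrable M (\<lambda>\<omega>. \<Sum>j<K. q ^ j * (\<Prod>k\<in>{K - Suc j..<K}. (of_bool (L \<omega> r k) :: real)))"
    by (rule Bochner_Integration.integrable_sum) (rule ip)
  show "integrable M (W q r)" unfolding W_def using isum by simp
  have "(\<integral>\<omega>. W q r \<omega> \<partial>M) = 1 - (1 - q) * (\<integral>\<omega>. (\<Sum>j<K. q ^ j * (\<Prod>k\<in>{K - Suc j..<K}. (of_bool (L \<omega> r k) :: real))) \<partial>M)"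
    unfolding W_def using isum by (simp add: prob_space)
  also have "(\<integral>\<omega>. (\<Sum>j<K. q ^ j * (\<Prod>k\<in>{K - Suc j..<K}. (of_bool (L \<omega> r k) :: real))) \<partial>M)
      = (\<Sum>j<K. q ^ j * p ^ Suc j)"
  proof -
    have "(\<integral>\<omega>. (\<Sum>j<K. q ^ j * (\<Prod>k\<in>{K - Suc j..<K}. (of_bool (L \<omega> r k) :: real))) \<partial>M)
        = (\<Sum>j<K. \<integral>\<omega>. q ^ j * (\<Prod>k\<in>{K - Suc j..<K}. (of_bool (L \<omega> r k) :: real)) \<partial>M)"
      by (rule Bochner_Integration.integral_sum) (rule ip)
    also have "\<dots> = (\<Sum>j<K. q ^ j * p ^ Suc j)"
    proof (intro sum.cong refl)
      fix j assume j: "j \<in> {..<K}"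
      have "card {K - Suc j..<K} = Suc j" using j by simp
      then show "(\<integral>\<omega>. q ^ j * (\<Prod>k\<in>{K - Suc j..<K}. (of_bool (L \<omega> r k) :: real)) \<partial>M) = q ^ j * p ^ Suc j"
        using E_prod(2)[OF r sub[of j]] by simp
    qed
    finally show ?thesis .
  qed
  finally show "(\<integral>\<omega>. W q r \<omega> \<partial>M) = 1 - (1 - q) * (\<Sum>j<K. q ^ j * p ^ Suc j)" .
qed

lemma W_indep: "indep_vars (\<lambda>_. borel) (\<lambda>r. W q r) {..<R}"
proof -
  define K' where "K' = (\<lambda>r::nat. {r} \<times> {..<K})"
  have ir: "indep_vars (\<lambda>r. PiM (K' r) (\<lambda>_. count_space UNIV)) (\<lambda>r \<omega>. restrict (\<lambda>x. L \<omega> (fst x) (snd x)) (K' r)) {..<R}"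
    by (rule indep_vars_restrict[OF indepL']) (auto simp: K'_def disjoint_family_on_def)
  define Y where "Y = (\<lambda>r (f :: nat \<times> nat \<Rightarrow> bool). 1 - (1 - q) * (\<Sum>j<K. q ^ j * (\<Prod>k\<in>{K - Suc j..<K}. (of_bool (f (r, k)) :: real))))"
  have Ym: "Y r \<in> borel_measurable (PiM (K' r) (\<lambda>_. count_space UNIV))" for r
  proof -
    have c: "(\<lambda>f. (of_bool (f (r, k)) :: real)) \<in> borel_measurable (PiM (K' r) (\<lambda>_. count_space UNIV))" if "k < K" for k
      by (rule measurable_compose[OF measurable_component_singleton]) (use that in \<open>auto simp: K'_def\<close>)
    show ?thesis unfolding Y_def
      by (intro borel_measurable_diff borel_measurable_times borel_measurable_sum borel_measurable_prod
          borel_measurable_const c) auto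
  qed
  have "indep_vars (\<lambda>_. borel) (\<lambda>r \<omega>. Y r (restrict (\<lambda>x. L \<omega> (fst x) (snd x)) (K' r))) {..<R}"
    by (rule indep_vars_compose2[OF ir Ym])
  moreover have "Y r (restrict (\<lambda>x. L \<omega> (fst x) (snd x)) (K' r)) = W q r \<omega>" for r \<omega>
    unfolding Y_def W_def K'_def by (intro arg_cong2[where f="(-)"] refl arg_cong2[where f="(*)"] sum.cong prod.cong) auto
  ultimately show ?thesis by simp
qed

lemma E_qcard:
  "(\<integral>\<omega>. q ^ card (received R K (L \<omega>)) \<partial>M) = (1 - (1 - q) * (\<Sum>j<K. q ^ j * p ^ Suc j)) ^ R"
proof -
  have "q ^ card (received R K (L \<omega>)) = (\<Prod>r<R. W q r \<omega>)" for \<omega>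
    unfolding card_received power_sum_nat[OF finite_lessThan] W_def using W_pointwise by simp
  then have "(\<integral>\<omega>. q ^ card (received R K (L \<omega>)) \<partial>M) = (\<integral>\<omega>. (\<Prod>r<R. W q r \<omega>) \<partial>M)" by simp
  also have "\<dots> = (\<Prod>r<R. \<integral>\<omega>. W q r \<omega> \<partial>M)"
    by (rule indep_vars_lebesgue_integral[OF finite_lessThan W_indep]) (auto intro: W_int)
  also have "\<dots> = (\<Prod>r<R. 1 - (1 - q) * (\<Sum>j<K. q ^ j * p ^ Suc j))" by (intro prod.cong refl W_int) auto
  finally show ?thesis by simp
qed

end

lemma algebra_Eb:
  fixes p q :: real
  assumes p: "0 < p" "p \<le> 1" and q: "0 < q" "q < 1"
  shows "1 - (1 - q) * (\<Sum>j<K. q ^ j * p ^ Suc j) = (1 - p + p * (1 - q) * (p * q) ^ K) / (1 - p * q)"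
proof -
  have pq: "p * q < 1" using p q by (metis mult_le_one less_le_not_le mult_strict_left_mono mult_1_right order.strict_trans2 less_imp_le)
  have "(\<Sum>j<K. q ^ j * p ^ Suc j) = p * (\<Sum>j<K. (p * q) ^ j)"
    by (simp add: sum_distrib_left power_mult_distrib mult_ac)
  also have "(\<Sum>j<K. (p * q) ^ j) = ((p * q) ^ K - 1) / (p * q - 1)"
    using pq by (intro geometric_sum) simp
  finally have s: "(\<Sum>j<K. q ^ j * p ^ Suc j) = p * (((p * q) ^ K - 1) / (p * q - 1))" .
  have d: "1 - p * q \<noteq> 0" "p * q - 1 \<noteq> 0" using pq by auto
  show ?thesis unfolding s using d by (simp add: field_simps)
qed

lemma final_numeric:
  fixes s N :: nat and \<epsilon> R\<Lambda> :: real
  assumes s: "0 < s" "s \<le> N" and e: "0 < \<epsilon>" "\<epsilon> < 1"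
  and h: "R\<Lambda> \<ge> 4/3 * real s * ln (exp 1 * real N / real s) + 14/3 * real s + 4/3 * ln (2 / \<epsilon>)"
  shows "2 * (exp 1 * real N / real s) ^ s * exp (7 * real s / 2) * exp (- R\<Lambda>) \<le> \<epsilon>"
proof -
  define B where "B = exp 1 * real N / real s"
  have B: "B \<ge> exp 1" unfolding B_def using s by (simp add: field_simps)
  then have Bp: "B > 0" by (smt (verit) exp_gt_zero)
  have lnB: "ln B \<ge> 1" using B by (metis ln_exp ln_le_cancel_iff exp_gt_zero Bp)
  have le2: "ln (2 / \<epsilon>) > 0" using e by simp
  define Y where "Y = real s * ln B + 7 * real s / 2 + ln (2 / \<epsilon>)"
  have Y0: "Y \<ge> 0" unfolding Y_def using lnB le2 by (simp add: add_nonneg_nonneg)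
  have "R\<Lambda> \<ge> 4/3 * Y" using h unfolding Y_def B_def by (simp add: algebra_simps)
  then have RY: "R\<Lambda> \<ge> Y" using Y0 by linarith
  have "exp (- R\<Lambda>) \<le> exp (- Y)" using RY by simp
  also have "exp (- Y) = inverse (B ^ s) * inverse (exp (7 * real s / 2)) * (\<epsilon> / 2)"
  proof -
    have "exp (real s * ln B) = B ^ s" using exp_of_nat_mult[of s "ln B"] Bp by simp
    moreover have "exp (ln (2 / \<epsilon>)) = 2 / \<epsilon>" using e by simp
    moreover have "exp (- Y) = exp (-(real s * ln B)) * exp (-(7 * real s / 2)) * exp (-(ln (2 / \<epsilon>)))"
      unfolding Y_def minus_add_distrib exp_add by simp
    ultimately show ?thesis using e by (simp add: exp_minus)
  
  qed
  finally have "exp (- R\<Lambda>) \<le> inverse (B ^ s) * inverse (exp (7 * real s / 2)) * (\<epsilon> / 2)" .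
  then have "2 * B ^ s * exp (7 * real s / 2) * exp (- R\<Lambda>) \<le> 2 * B ^ s * exp (7 * real s / 2) * (inverse (B ^ s) * inverse (exp (7 * real s / 2)) * (\<epsilon> / 2))"
    using Bp by (intro mult_left_mono) auto
  also have "\<dots> = \<epsilon>" using Bp by (simp add: field_simps)
  finally show ?thesis unfolding B_def .
qed


lemma (in prob_space) sum_T:
  assumes Tm: "T \<in> measurable M (count_space UNIV)" and TU: "\<And>\<omega>. \<omega> \<in> space M \<Longrightarrow> T \<omega> \<in> Pow U"
    and fin: "finite U"
  shows "(\<integral>\<omega>. f (T \<omega>) \<partial>M) = (\<Sum>t\<in>Pow U. f t * prob {\<omega>\<in>space M. T \<omega> = t})"
proof -
  have sets: "{\<omega>\<in>space M. T \<omega> = t} \<in> sets M" for t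
  proof -
    have "T -` {t} \<inter> space M \<in> sets M" by (rule measurable_sets[OF Tm]) auto
    moreover have "{\<omega>\<in>space M. T \<omega> = t} = T -` {t} \<inter> space M" by auto
    ultimately show ?thesis by simp
  qed
  have "(\<integral>\<omega>. f (T \<omega>) \<partial>M) = (\<integral>\<omega>. (\<Sum>t\<in>Pow U. f t * indicator {\<omega>\<in>space M. T \<omega> = t} \<omega>) \<partial>M)"
  proof (rule Bochner_Integration.integral_cong[OF refl])
    fix \<omega> assume w: "\<omega> \<in> space M"
    have "(\<Sum>t\<in>Pow U. f t * indicator {\<omega>\<in>space M. T \<omega> = t} \<omega>) = (\<Sum>t\<in>Pow U. if t = T \<omega> then f t else 0)"
      using w by (intro sum.cong) (auto simp: indicator_def)
    also have "\<dots> = f (T \<omega>)" using TU[OF w] fin by simp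
    finally show "f (T \<omega>) = (\<Sum>t\<in>Pow U. f t * indicator {\<omega>\<in>space M. T \<omega> = t} \<omega>)" by simp
  qed
  also have "\<dots> = (\<Sum>t\<in>Pow U. \<integral>\<omega>. f t * indicator {\<omega>\<in>space M. T \<omega> = t} \<omega> \<partial>M)"
    by (rule Bochner_Integration.integral_sum) (auto intro!: integrable_mult_right integrable_real_indicator sets simp: less_top[symmetric])
  also have "\<dots> = (\<Sum>t\<in>Pow U. f t * prob {\<omega>\<in>space M. T \<omega> = t})"
    using sets by (intro sum.cong refl) simp
  finally show ?thesis .
qed

theorem theorem3:
  fixes c :: real
  assumes c_pos: "c > 0"
  shows "\<exists>C>0. \<forall>(M :: 'a measure) (A :: 'a \<Rightarrow> nat \<Rightarrow> nat \<Rightarrow> real)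
           (L :: 'a \<Rightarrow> nat \<Rightarrow> nat \<Rightarrow> bool) R K N s (p::real) (\<epsilon>::real) (\<delta>::real).
     prob_space M \<and>
     0 < R \<and> 0 < K \<and> 0 < N \<and> 0 < s \<and> s \<le> N \<and> 0 \<le> p \<and> p \<le> 1 \<and> \<epsilon> > 0 \<and>
     0 < \<delta> \<and> \<delta> < 1 \<and>
     \<comment> \<open>A: subGaussian random matrix with parameter c, m = R*K rows, N columns\<close>
     prob_space.indep_vars M (\<lambda>_. borel) (\<lambda>(i,j) \<omega>. A \<omega> i j) ({..<R*K} \<times> {..<N}) \<and>
     (\<forall>i<R*K. \<forall>j<N.
        integrable M (\<lambda>\<omega>. A \<omega> i j) \<and> integrable M (\<lambda>\<omega>. (A \<omega> i j)\<^sup>2) \<and>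
        (\<integral>\<omega>. A \<omega> i j \<partial>M) = 0 \<and> (\<integral>\<omega>. (A \<omega> i j)\<^sup>2 \<partial>M) = 1 \<and>
        (\<forall>\<theta>::real. (\<integral>\<^sup>+\<omega>. ennreal (exp (\<theta> * A \<omega> i j)) \<partial>M) \<le> ennreal (exp (c * \<theta>\<^sup>2)))) \<and>
     \<comment> \<open>links: independent Bernoulli(p) erasure channels\<close>
     prob_space.indep_vars M (\<lambda>_. count_space UNIV) (\<lambda>(r,k) \<omega>. L \<omega> r k) ({..<R} \<times> {..<K}) \<and>
     (\<forall>r<R. \<forall>k<K. measure M {\<omega>\<in>space M. L \<omega> r k} = p) \<and>
     \<comment> \<open>the received index set T is independent of A\<close>
     (\<lambda>\<omega>. received R K (L \<omega>)) \<in> measurable M (count_space UNIV) \<and>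
     prob_space.indep_set M
        (sigma_sets (space M) {(\<lambda>\<omega>. restrict (\<lambda>(i,j). A \<omega> i j) ({..<R*K} \<times> {..<N})) -` S \<inter> space M
            | S. S \<in> sets (Pi\<^sub>M ({..<R*K} \<times> {..<N}) (\<lambda>_. borel))})
        (sigma_sets (space M) {(\<lambda>\<omega>. received R K (L \<omega>)) -` S \<inter> space M
            | S. S \<in> sets (count_space UNIV)}) \<and>
     \<comment> \<open>the hypothesis on R (right-hand side is +infinity when p = 0)\<close>
     p > 0 \<and>
     real R \<ge> inverse (ln ((1 - p * exp (- C * \<delta>\<^sup>2)) /
                 (1 - p + p * (1 - exp (- C * \<delta>\<^sup>2)) * (p * exp (- C * \<delta>\<^sup>2)) ^ K)))
              * (4/3 * real s * ln (exp 1 * real N / real s) + 14/3 * real s + 4/3 * ln (2 / \<epsilon>))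
     \<longrightarrow>
     measure M {\<omega>\<in>space M.
        ric (\<lambda>i j. A \<omega> i j / sqrt (real (card (received R K (L \<omega>)))))
            (received R K (L \<omega>)) N s < \<delta>} \<ge> 1 - \<epsilon>"
proof -
  define a :: real where "a = 4 * c * exp 1 + 1"
  define C :: real where "C = 1 / (20000 * a\<^sup>2)"
  have a1: "a \<ge> 1" using c_pos by (simp add: a_def)
  have Cpos: "C > 0" using a1 by (simp add: C_def)
  show ?thesis
    apply (rule exI[of _ C])
    apply (intro conjI Cpos allI impI)
    apply (elim conjE)
    subgoal premises prems for M A L R K N s p \<epsilon> \<delta>
    proof -
      interpret P: prob_space M by (rule prems(1))
      have sg: "subg M A (R*K) N c"
        unfolding subg_def subg_axioms_def using prems(1,12,13) c_pos by auto
      interpret S: subg M A "R*K" N c by (rule sg)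
      have nw: "netw M L R K p"
        unfolding netw_def netw_axioms_def using prems(1,14,15) by auto
      interpret NW: netw M L R K p by (rule nw)
      have aS: "S.aconst = a" unfolding S.aconst_def a_def ..
      show ?thesis
      proof (cases "\<epsilon> \<ge> 1")
        case True
        then show ?thesis using measure_nonneg[of M] by (smt (verit))
      next
        case False
        then have e1: "\<epsilon> < 1" by simp
        define q where "q = exp (- C * \<delta>\<^sup>2)"
        have q: "0 < q" "q < 1" using Cpos prems(10) by (auto simp: q_def)
        define T where "T = (\<lambda>\<omega>. received R K (L \<omega>))"
        define U where "U = {..<R*K}"
        have TU: "T \<omega> \<in> Pow U" for \<omega>
        proof -
          have "r * K + j < R * K" if "r < R" "j < K" for r j
          proof -
            have "r * K + j < r * K + K" using that by simp
            also have "\<dots> = Suc r * K" by simp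
            also have "\<dots> \<le> R * K" using that by (intro mult_le_mono1) simp
            finally show ?thesis .
          qed
          then show ?thesis unfolding T_def U_def received_def by auto
        qed
        define K0 where "K0 = 2 * (exp 1 * real N / real s) ^ s * exp (7 * real s / 2)"
        define G where "G = (\<lambda>t. {\<omega>\<in>space M. ric (\<lambda>i j. A \<omega> i j / sqrt (real (card t))) t N s < \<delta>})"
        define Ts where "Ts = (\<lambda>t. {\<omega>\<in>space M. T \<omega> = t})"
        have Tm: "T \<in> measurable M (count_space UNIV)" unfolding T_def by (rule prems(16))
        have Tpre: "Ts t = T -` {t} \<inter> space M" for t unfolding Ts_def by auto
        have Tsets: "Ts t \<in> sets M" for t unfolding Tpre by (rule measurable_sets[OF Tm]) auto
        have Gsets: "G t \<in> sets M" if "t \<subseteq> U" for t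
          unfolding G_def by (rule S.G_sets) (use that prems(4,5) in \<open>auto simp: U_def\<close>)
        have pG: "measure M (G t) \<ge> 1 - K0 * q ^ card t" if "t \<subseteq> U" for t
        proof -
          have "q ^ card t = exp (- (1 / (20000 * S.aconst\<^sup>2)) * \<delta>\<^sup>2 * real (card t))"
            unfolding q_def aS C_def using exp_of_nat_mult[of "card t" "- (1 / (20000 * a\<^sup>2)) * \<delta>\<^sup>2"]
            by (simp add: mult.commute)
          then show ?thesis unfolding G_def K0_def
            using S.prob_G[of t s \<delta>] that prems(5,6,10,11) by (simp add: U_def mult.assoc)
        qed
        have indp: "measure M (Ts t \<inter> G t) = measure M (G t) * measure M (Ts t)" if "t \<subseteq> U" for t
        proof -
          let ?FA = "\<lambda>\<omega>. restrict (\<lambda>(i,j). A \<omega> i j) ({..<R*K} \<times> {..<N})"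
          let ?G' = "{f \<in> space (PiM ({..<R*K} \<times> {..<N}) (\<lambda>_. borel)). ric (\<lambda>i j. f (i, j) / sqrt (real (card t))) t N s < \<delta>}"
          have G'sets: "?G' \<in> sets (PiM ({..<R*K} \<times> {..<N}) (\<lambda>_. borel))"
            by (rule ric_event_PiM) (use that prems(4,5) in \<open>auto simp: U_def\<close>)
          have Geq: "G t = ?FA -` ?G' \<inter> space M" unfolding G_def
            by (rule S.G_eq) (use that in \<open>auto simp: U_def\<close>)
          have "?FA -` ?G' \<inter> space M \<in> {?FA -` S \<inter> space M | S. S \<in> sets (PiM ({..<R*K} \<times> {..<N}) (\<lambda>_. borel))}"
            using G'sets by blast
          then have ga: "G t \<in> sigma_sets (space M) {?FA -` S \<inter> space M | S. S \<in> sets (PiM ({..<R*K} \<times> {..<N}) (\<lambda>_. borel))}"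
            unfolding Geq by (rule sigma_sets.Basic)
          have tb: "Ts t \<in> sigma_sets (space M) {(\<lambda>\<omega>. received R K (L \<omega>)) -` S \<inter> space M | S. S \<in> sets (count_space UNIV)}"
            unfolding Tpre T_def by (auto intro!: sigma_sets.Basic)
          have "measure M (G t \<inter> Ts t) = measure M (G t) * measure M (Ts t)"
            by (rule P.indep_setD[OF prems(17) ga tb])
          then show ?thesis by (simp add: Int_commute)
        qed
        have E_eq: "{\<omega>\<in>space M. ric (\<lambda>i j. A \<omega> i j / sqrt (real (card (received R K (L \<omega>))))) (received R K (L \<omega>)) N s < \<delta>}
            = (\<Union>t\<in>Pow U. Ts t \<inter> G t)"
          using TU unfolding Ts_def G_def T_def by auto
        have finU: "finite (Pow U)" unfolding U_def by simp
        have "measure M (\<Union>t\<in>Pow U. Ts t \<inter> G t) = (\<Sum>t\<in>Pow U. measure M (Ts t \<inter> G t))"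
          by (rule P.finite_measure_finite_Union[OF finU])
             (auto intro!: sets.Int Tsets[unfolded Ts_def] Gsets simp: disjoint_family_on_def Ts_def)
        also have "\<dots> = (\<Sum>t\<in>Pow U. measure M (G t) * measure M (Ts t))" by (intro sum.cong refl indp) auto
        also have "\<dots> \<ge> (\<Sum>t\<in>Pow U. (1 - K0 * q ^ card t) * measure M (Ts t))"
          by (intro sum_mono mult_right_mono pG) auto
        finally have step1: "measure M (\<Union>t\<in>Pow U. Ts t \<inter> G t) \<ge> (\<Sum>t\<in>Pow U. (1 - K0 * q ^ card t) * measure M (Ts t))" .
        have sum1: "(\<Sum>t\<in>Pow U. measure M (Ts t)) = 1"
          using P.sum_T[OF Tm _ _, of U "\<lambda>_. 1"] TU unfolding Ts_def U_def by (simp add: P.prob_space)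
        have sumq: "(\<Sum>t\<in>Pow U. q ^ card t * measure M (Ts t)) = (1 - (1 - q) * (\<Sum>j<K. q ^ j * p ^ Suc j)) ^ R"
          using P.sum_T[OF Tm _ _, of U "\<lambda>t. q ^ card t"] TU NW.E_qcard[of q] unfolding Ts_def U_def T_def
          by simp
        have split: "(\<Sum>t\<in>Pow U. (1 - K0 * q ^ card t) * measure M (Ts t)) = (\<Sum>t\<in>Pow U. measure M (Ts t)) - K0 * (\<Sum>t\<in>Pow U. q ^ card t * measure M (Ts t))"
          by (simp add: sum_subtractf sum_distrib_left algebra_simps)
        define den where "den = 1 - p + p * (1 - q) * (p * q) ^ K"
        have pq: "0 < p * q" "p * q < 1" using prems(18,8) q by (auto intro: mult_pos_pos) (metis mult_le_one less_le_not_le mult_strict_left_mono mult_1_right order.strict_trans2 less_imp_le)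
        have pqK: "(p * q) ^ K < 1" using pq prems(3) by (simp add: power_less_one_iff)
        have den0: "den > 0"
        proof -
          have "0 < p * (1 - q) * (p * q) ^ K" using prems(18) q pq by simp
          then show ?thesis unfolding den_def using prems(8) by linarith
        qed
        have den1: "den < 1 - p * q"
        proof -
          have "0 < p * (1 - q) * (1 - (p * q) ^ K)" using prems(18) q pqK by simp
          then show ?thesis unfolding den_def by (simp add: algebra_simps)
        qed
        define \<Lambda> where "\<Lambda> = ln ((1 - p * q) / den)"
        have \<Lambda>0: "\<Lambda> > 0" unfolding \<Lambda>_def using den0 den1 by simp
        have Eb: "1 - (1 - q) * (\<Sum>j<K. q ^ j * p ^ Suc j) = exp (- \<Lambda>)"
        proof -
          have "1 - (1 - q) * (\<Sum>j<K. q ^ j * p ^ Suc j) = den / (1 - p * q)"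
            unfolding den_def by (rule algebra_Eb) (use prems(18,8) q in auto)
          also have "\<dots> = exp (- \<Lambda>)"
          proof -
            have "1 - p * q > 0" using den0 den1 by linarith
            then show ?thesis unfolding \<Lambda>_def using den0 by (simp add: exp_minus ln_div exp_diff)
          qed
          finally show ?thesis .
        qed
        define X where "X = 4/3 * real s * ln (exp 1 * real N / real s) + 14/3 * real s + 4/3 * ln (2 / \<epsilon>)"
        have RL: "real R * \<Lambda> \<ge> 4/3 * real s * ln (exp 1 * real N / real s) + 14/3 * real s + 4/3 * ln (2 / \<epsilon>)"
        proof -
          have "real R \<ge> inverse \<Lambda> * X"
            using prems(19) unfolding \<Lambda>_def den_def q_def X_def .
          then have "real R * \<Lambda> \<ge> inverse \<Lambda> * X * \<Lambda>"
            using \<Lambda>0 by (intro mult_right_mono) auto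
          moreover have "inverse \<Lambda> * X * \<Lambda> = X" using \<Lambda>0 by (simp add: field_simps)
          ultimately have "real R * \<Lambda> \<ge> X" by linarith
          then show ?thesis unfolding X_def .
        qed
        have powR: "(exp (- \<Lambda>)) ^ R = exp (- (real R * \<Lambda>))"
          using exp_of_nat_mult[of R "- \<Lambda>"] by simp
        have fin: "K0 * exp (- (real R * \<Lambda>)) \<le> \<epsilon>"
          unfolding K0_def by (rule final_numeric[OF prems(5,6,9) e1 RL])
        have "1 - \<epsilon> \<le> 1 - K0 * (\<Sum>t\<in>Pow U. q ^ card t * measure M (Ts t))"
          using fin unfolding sumq Eb powR by simp
        also have "\<dots> \<le> measure M (\<Union>t\<in>Pow U. Ts t \<inter> G t)" using step1 split sum1 by simp
        finally show ?thesis unfolding E_eq .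
      qed
    qed
    done
qed

end
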